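(* In the blowup/base-change setting below, fix $p\in\{0,\dots,P-1\}$. Write $\Delta'=\sum_{m=1}^Nc_mM_m$ with $c_m\in\mathbb C^*$ and distinct monomials $M_m=t^{\tau_m}\big(\prod_{q=0}^Pe_q^{\epsilon_{q,m}}\big)s^{\sigma_m}$. Define $\epsilon_p^{(0)}:=\min\{\epsilon_{p,m}:\epsilon_{p+1,m}=0\}$ and $\epsilon_p^{(1)}:=\min\{\epsilon_{p+1,m}:\epsilon_{p,m}=0\}$, and for a positive integer $k$ define on $[0,k]$ the linear functions $\bar{\mathfrak L}_m(r):=(k-r)\epsilon_{p,m}+r\,\epsilon_{p+1,m}$ and $\bar{\mathfrak M}(r):=\min_{1\le m\le N}\bar{\mathfrak L}_m(r)$; let $\mathfrak M$ denote $\bar{\mathfrak M}$ for $k=1$, a function on $[0,1]$. (1) If there are special fibers at $B^{p,p+1}$, then $\epsilon_p^{(0)}>0$ and $\epsilon_p^{(1)}>0$. (2) $\bar n_{kp+r}=(k-r)n_p+r\,n_{p+1}+\bar{\mathfrak M}(r)$ for $r=0,1,\dots,k$. (3) $\bar{\mathfrak M}$ is piecewise linear and concave, $\bar{\mathfrak M}(kr)=k\,\mathfrak M(r)$ for $r\in[0,1]$, and $\mathfrak M(0)=\mathfrak M(1)=0$. The points $0<\mathcal R_1<\dots<\mathcal R_{\mathcal N-1}<1$ at which $\mathfrak M$ is not locally linear are rational numbers. (4) There are no special fibers at $\bar B^{\bar p,\bar p+1}$ for all $\bar p=kp,\dots,k(p+1)-1$ if and only if $k\mathcal R_\iota\in\mathbb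 Z$ for all $\iota=1,\dots,\mathcal N-1$, i.e. if and only if $k$ is a multiple of $k_0^{(p)}$, the smallest positive integer with this property (equal to the least common multiple of the denominators of the $\mathcal R_\iota$ in lowest terms).
   Context: Blowup setting. Let $f=f(s,t;u)$, $g=g(s,t;u)$ be complex polynomials, homogeneous in $(s,t)$ of degrees $8$ and $12$, defining a family of Weierstrass models $y^2=x^3+fxz^4+gz^6$ over $\mathbb P^1_{[s:t]}$ with parameter $u$; $\Delta:=4f^3+27g^2$. Let $a,b$ be the vanishing orders in $s$ at $s=0$ of $f,g$ for generic $u\ne0$ (not both $a\ge4$, $b\ge6$), and write $f=s^a\sum_i\mathcal F_i\,s^it^{8-a-i}$, $g=s^b\sum_j\mathcal G_j\,s^jt^{12-b-j}$. Assume the 3-fold vanishing orders of $(f,g,\Delta)$ at $(u,s)=(0,0)$ (largest $N$ with the function in $(u,s)^N$, $t=1$) are $(4+\alpha,6+\beta,12+\gamma)$ with $\alpha=0$ or $\beta=0$, and that this persists under all base changes $u\mapsto u^\ell$ (Classes 1–4). Blowup chain: $e_0:=u$; the $p$-th blowup substitutes $e_{p-1}\mapsto e_{p-1}e_p$, $s\mapsto se_p$ and divides $f,g,\Delta$ by $e_p^4,e_p^6,e_p^{12}$; $\mu_{q,i}$, $\nu_{q,j}$ are the vanishing orders in $e_q$ of the coefficients $\mathcal F_i(e_0,\dots)$, $\mathcal G_j(e_0,\dots)$; $P$ is the first number of blowups for which some $i<4-a$ with $\mathcal F_i\neq0$ has $\mu_{P,i}<4-a-i$ or some $j<6-b$ with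 $\mathcal G_j\ne0$ has $\nu_{P,j}<6-b-j$. Standing assumption: there is such an $i$ with $\mu_{P,i}=0$ or such a $j$ with $\nu_{P,j}=0$ (achievable by a preliminary base change). Base components $B^p=\{e_p=0\}$ form a chain, $B^{p,p+1}=\{e_p=e_{p+1}=0\}$. $n_p$ is the largest power of $e_p$ dividing $\Delta$ and $\Delta=\prod_qe_q^{n_q}\Delta'$. There is a special fiber at $B^{p,p+1}$ iff $\Delta'$ vanishes there, i.e. every monomial of $\Delta'$ is divisible by $e_p$ or $e_{p+1}$. Base change: for a positive integer $k$, the barred configuration $\bar{\mathcal Y}$ is obtained by substituting $u\mapsto u^k$ in $f,g$ and then performing the blowup chain, which now consists of $\bar P=kP$ blowups with coordinates $\bar e_0,\dots,\bar e_{\bar P}$; $\bar B^{\bar p}$, $\bar B^{\bar p,\bar p+1}$, $\bar n_{\bar p}$, $\bar\Delta'$ are defined analogously. *)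

theory Defs
  imports "HOL-Analysis.Analysis" "HOL-Library.Poly_Mapping" "HOL-Library.Extended_Nat"
begin

text \<open>Polynomials in the variables s (index 0), t (index 1), e_q (index q+2), with e_0 = u.
  A polynomial is a finitely supported map from exponent vectors to complex coefficients.\<close>

type_synonym mpoly = "(nat \<Rightarrow>\<^sub>0 nat) \<Rightarrow>\<^sub>0 complex"

definition evar :: "nat \<Rightarrow> nat" where "evar q = q + 2"

definition remap :: "((nat \<Rightarrow>\<^sub>0 nat) \<Rightarrow> (nat \<Rightarrow>\<^sub>0 nat)) \<Rightarrow> mpoly \<Rightarrow> mpoly" where
  "remap T h = (\<Sum>\<alpha>\<in>Poly_Mapping.keys h. Poly_Mapping.single (T \<alpha>) (Poly_Mapping.lookup h \<alpha>))"

text \<open>p-th blowup (p >= 1): e_{p-1} -> e_{p-1} e_p, s -> s e_p, then divide by e_p^d.\<close>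
definition blowup_step :: "nat \<Rightarrow> nat \<Rightarrow> mpoly \<Rightarrow> mpoly" where
  "blowup_step p d h = remap (\<lambda>\<alpha>. (\<alpha> + Poly_Mapping.single (evar p)
        (Poly_Mapping.lookup \<alpha> (evar (p - 1)) + Poly_Mapping.lookup \<alpha> 0))
      - Poly_Mapping.single (evar p) d) h"

fun chain :: "nat \<Rightarrow> mpoly \<Rightarrow> nat \<Rightarrow> mpoly" where
  "chain d h 0 = h"
| "chain d h (Suc p) = blowup_step (Suc p) d (chain d h p)"

definition Disc :: "mpoly \<Rightarrow> mpoly \<Rightarrow> mpoly" where
  "Disc f g = 4 * f ^ 3 + 27 * g ^ 2"

text \<open>Base change u -> u^k.\<close>
definition base_change :: "nat \<Rightarrow> mpoly \<Rightarrow> mpoly" where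
  "base_change k h = remap (\<lambda>\<alpha>. \<alpha> + Poly_Mapping.single 2 ((k - 1) * Poly_Mapping.lookup \<alpha> 2)) h"

definition s_order :: "mpoly \<Rightarrow> enat" where
  "s_order h = (if h = 0 then \<infinity> else enat (Min ((\<lambda>\<alpha>. Poly_Mapping.lookup \<alpha> 0) ` Poly_Mapping.keys h)))"

text \<open>3-fold vanishing order at (u,s)=(0,0), t=1, after base change u -> u^l.\<close>
definition ord3 :: "nat \<Rightarrow> mpoly \<Rightarrow> enat" where
  "ord3 l h = (if h = 0 then \<infinity> else
     enat (Min ((\<lambda>\<alpha>. Poly_Mapping.lookup \<alpha> 0 + l * Poly_Mapping.lookup \<alpha> 2) ` Poly_Mapping.keys h)))"

definition Fnz :: "mpoly \<Rightarrow> nat \<Rightarrow> bool" where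
  "Fnz h \<sigma> = (\<exists>\<alpha>\<in>Poly_Mapping.keys h. Poly_Mapping.lookup \<alpha> 0 = \<sigma>)"

definition mu :: "nat \<Rightarrow> mpoly \<Rightarrow> nat \<Rightarrow> nat \<Rightarrow> nat" where
  "mu d h q \<sigma> = Min ((\<lambda>\<alpha>. Poly_Mapping.lookup \<alpha> (evar q)) `
      {\<alpha>\<in>Poly_Mapping.keys (chain d h q). Poly_Mapping.lookup \<alpha> 0 = \<sigma>})"

definition stop_cond :: "mpoly \<Rightarrow> mpoly \<Rightarrow> nat \<Rightarrow> bool" where
  "stop_cond f g q =
     ((\<exists>\<sigma><4. Fnz f \<sigma> \<and> mu 4 f q \<sigma> < 4 - \<sigma>) \<or> (\<exists>\<sigma><6. Fnz g \<sigma> \<and> mu 6 g q \<sigma> < 6 - \<sigma>))"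

definition nvec :: "mpoly \<Rightarrow> nat \<Rightarrow> nat" where
  "nvec D q = Min ((\<lambda>\<alpha>. Poly_Mapping.lookup \<alpha> (evar q)) ` Poly_Mapping.keys D)"

definition Dprime :: "nat \<Rightarrow> mpoly \<Rightarrow> mpoly" where
  "Dprime Q D = remap (\<lambda>\<alpha>. \<alpha> - (\<Sum>q\<le>Q. Poly_Mapping.single (evar q) (nvec D q))) D"

text \<open>Special fiber at {e_p = e_{p+1} = 0}: every monomial of D' is divisible by e_p or e_{p+1}.\<close>
definition special_fiber :: "mpoly \<Rightarrow> nat \<Rightarrow> bool" where
  "special_fiber D' p = (\<forall>\<alpha>\<in>Poly_Mapping.keys D'.
      0 < Poly_Mapping.lookup \<alpha> (evar p) \<or> 0 < Poly_Mapping.lookup \<alpha> (evar (p + 1)))"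

definition locally_linear_at :: "(real \<Rightarrow> real) \<Rightarrow> real \<Rightarrow> bool" where
  "locally_linear_at F x = (\<exists>\<epsilon>>0. \<exists>c d. \<forall>z. \<bar>z - x\<bar> < \<epsilon> \<longrightarrow> F z = c * z + d)"

definition piecewise_linear_on :: "real \<Rightarrow> real \<Rightarrow> (real \<Rightarrow> real) \<Rightarrow> bool" where
  "piecewise_linear_on a b F = (\<exists>S. finite S \<and> a \<in> S \<and> b \<in> S \<and> S \<subseteq> {a..b} \<and>
     (\<forall>x\<in>S. \<forall>y\<in>S. x < y \<and> {x<..<y} \<inter> S = {} \<longrightarrow> (\<exists>c d. \<forall>z\<in>{x..y}. F z = c * z + d)))"

definition rat_denom :: "real \<Rightarrow> nat" where
  "rat_denom x = nat (snd (quotient_of (THE q. x = of_rat q)))"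

end

theory Submission
  imports Defs
begin


lemma poly_expand: "(h::'a \<Rightarrow>\<^sub>0 'b::comm_monoid_add) = (\<Sum>\<alpha>\<in>Poly_Mapping.keys h. Poly_Mapping.single \<alpha> (Poly_Mapping.lookup h \<alpha>))"
proof (rule poly_mapping_eqI)
  fix k
  show "Poly_Mapping.lookup h k = Poly_Mapping.lookup (\<Sum>\<alpha>\<in>Poly_Mapping.keys h. Poly_Mapping.single \<alpha> (Poly_Mapping.lookup h \<alpha>)) k"
    by (cases "k \<in> Poly_Mapping.keys h")
       (auto simp: lookup_sum lookup_single when_def in_keys_iff)
qed

lemma remap_super:
  assumes "finite S" "Poly_Mapping.keys h \<subseteq> S"
  shows "remap T h = (\<Sum>\<alpha>\<in>S. Poly_Mapping.single (T \<alpha>) (Poly_Mapping.lookup h \<alpha>))"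
  unfolding remap_def
  using assms by (intro sum.mono_neutral_left) (auto simp: in_keys_iff)

lemma remap_add: "remap T (h1 + h2) = remap T h1 + remap T h2"
proof -
  let ?S = "Poly_Mapping.keys h1 \<union> Poly_Mapping.keys h2"
  have k: "Poly_Mapping.keys (h1+h2) \<subseteq> ?S" by (rule keys_add)
  show ?thesis
    by (subst remap_super[OF _ k], simp, subst remap_super[of ?S h1], simp, simp,
        subst remap_super[of ?S h2], simp, simp)
       (simp add: lookup_add single_add sum.distrib)
qed

lemma remap_zero[simp]: "remap T 0 = 0" by (simp add: remap_def)

lemma remap_sum: "remap T (sum F S) = (\<Sum>x\<in>S. remap T (F x))"
  by (induction S rule: infinite_finite_induct) (auto simp: remap_add)

lemma remap_single[simp]: "remap T (Poly_Mapping.single \<alpha> c) = Poly_Mapping.single (T \<alpha>) c"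
  by (cases "c = 0") (auto simp: remap_def)

lemma remap_mult:
  assumes hom: "\<And>a b. T (a + b) = T a + T b"
  shows "remap T (p * q) = remap T p * remap T q"
proof -
  have "p * q = (\<Sum>\<alpha>\<in>Poly_Mapping.keys p. \<Sum>\<beta>\<in>Poly_Mapping.keys q.
      Poly_Mapping.single (\<alpha>+\<beta>) (Poly_Mapping.lookup p \<alpha> * Poly_Mapping.lookup q \<beta>))"
    by (subst poly_expand[of p], subst poly_expand[of q])
       (simp add: sum_distrib_left sum_distrib_right mult_single, rule sum.swap)
  hence "remap T (p*q) = (\<Sum>\<alpha>\<in>Poly_Mapping.keys p. \<Sum>\<beta>\<in>Poly_Mapping.keys q.
      Poly_Mapping.single (T \<alpha> + T \<beta>) (Poly_Mapping.lookup p \<alpha> * Poly_Mapping.lookup q \<beta>))"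
    by (simp add: remap_sum hom)
  also have "\<dots> = remap T p * remap T q"
    unfolding remap_def
    by (simp add: sum_distrib_left sum_distrib_right mult_single, rule sum.swap)
  finally show ?thesis .
qed

lemma remap_numeral:
  assumes "T 0 = 0"
  shows "remap T (numeral n :: mpoly) = numeral n"
proof -
  have "(numeral n :: mpoly) = Poly_Mapping.single 0 (numeral n)" by simp
  then show ?thesis using assms by (metis remap_single)
qed

lemma remap_keys:
  assumes "inj_on T (Poly_Mapping.keys h)"
  shows "Poly_Mapping.keys (remap T h) = T ` Poly_Mapping.keys h"
proof -
  have lk: "Poly_Mapping.lookup (remap T h) \<beta> = (\<Sum>\<alpha>\<in>Poly_Mapping.keys h. (Poly_Mapping.lookup h \<alpha> when T \<alpha> = \<beta>))" for \<beta>
    unfolding remap_def by (simp add: lookup_sum lookup_single)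
  have a: "Poly_Mapping.lookup (remap T h) (T \<alpha>0) = Poly_Mapping.lookup h \<alpha>0" if "\<alpha>0 \<in> Poly_Mapping.keys h" for \<alpha>0
  proof -
    have "(\<Sum>\<alpha>\<in>Poly_Mapping.keys h. (Poly_Mapping.lookup h \<alpha> when T \<alpha> = T \<alpha>0))
        = (\<Sum>\<alpha>\<in>{\<alpha>0}. (Poly_Mapping.lookup h \<alpha> when T \<alpha> = T \<alpha>0))"
      using that assms by (intro sum.mono_neutral_right) (auto simp: inj_on_def)
    then show ?thesis by (simp add: lk)
  qed
  have b: "Poly_Mapping.lookup (remap T h) \<beta> = 0" if "\<beta> \<notin> T ` Poly_Mapping.keys h" for \<beta>
    using that by (auto simp: lk intro!: sum.neutral)
  show ?thesis
  proof
    show "Poly_Mapping.keys (remap T h) \<subseteq> T ` Poly_Mapping.keys h"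
      using b by (auto simp: in_keys_iff)
    show "T ` Poly_Mapping.keys h \<subseteq> Poly_Mapping.keys (remap T h)"
      using a by (auto simp: in_keys_iff)
  qed
qed


definition EE :: "nat \<Rightarrow> (nat \<Rightarrow>\<^sub>0 nat) \<Rightarrow> nat \<Rightarrow> nat" where
  "EE d \<alpha> j = Poly_Mapping.lookup \<alpha> 2 + j * Poly_Mapping.lookup \<alpha> 0 - d * j"

definition CC :: "nat \<Rightarrow> nat \<Rightarrow> (nat \<Rightarrow>\<^sub>0 nat) \<Rightarrow> (nat \<Rightarrow>\<^sub>0 nat)" where
  "CC d Q \<alpha> = \<alpha> + (\<Sum>j\<in>{1..Q}. Poly_Mapping.single (evar j) (EE d \<alpha> j))"

lemma lookup_CC:
  "Poly_Mapping.lookup (CC d Q \<alpha>) v = Poly_Mapping.lookup \<alpha> v + (if 3 \<le> v \<and> v \<le> Q + 2 then EE d \<alpha> (v - 2) else 0)"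
proof -
  have "(\<Sum>j\<in>{1..Q}. Poly_Mapping.lookup (Poly_Mapping.single (evar j) (EE d \<alpha> j)) v)
        = (if 3 \<le> v \<and> v \<le> Q + 2 then EE d \<alpha> (v - 2) else 0)"
  proof (cases "3 \<le> v \<and> v \<le> Q + 2")
    case True
    have vv0: "Suc (Suc (v-2)) = v" using True by (simp add: numeral_2_eq_2 Suc_diff_Suc)
    have "(\<Sum>j\<in>{1..Q}. Poly_Mapping.lookup (Poly_Mapping.single (evar j) (EE d \<alpha> j)) v)
        = (\<Sum>j\<in>{v-2}. Poly_Mapping.lookup (Poly_Mapping.single (evar j) (EE d \<alpha> j)) v)"
      using True by (intro sum.mono_neutral_right) (auto simp: lookup_single evar_def when_def vv0)
    moreover have vv: "evar (v-2) = v" unfolding evar_def using True by arith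
    ultimately show ?thesis using True by simp
  next
    case False
    then show ?thesis by (auto simp: lookup_single evar_def when_def intro!: sum.neutral)
  qed
  then show ?thesis by (simp add: CC_def lookup_add lookup_sum)
qed

definition valid :: "nat \<Rightarrow> nat \<Rightarrow> mpoly \<Rightarrow> bool" where
  "valid d Q h = (\<forall>\<alpha>\<in>Poly_Mapping.keys h. (\<forall>v\<ge>3. Poly_Mapping.lookup \<alpha> v = 0) \<and>
      d * Q \<le> Poly_Mapping.lookup \<alpha> 2 + Q * Poly_Mapping.lookup \<alpha> 0)"

lemma valid_le: assumes "valid d Q h" "j \<le> Q" and that: "\<alpha> \<in> Poly_Mapping.keys h"
  shows "d * j \<le> Poly_Mapping.lookup \<alpha> 2 + j * Poly_Mapping.lookup \<alpha> 0"
proof -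
  let ?a = "Poly_Mapping.lookup \<alpha> 2" and ?b = "Poly_Mapping.lookup \<alpha> 0"
  have h: "d * Q \<le> ?a + Q * ?b" using assms that by (auto simp: valid_def)
  show ?thesis
  proof (cases "d \<le> ?b")
    case True
    then show ?thesis by (metis mult.commute mult_le_mono1 trans_le_add2)
  next
    case False
    obtain m where m: "Q = j + m" using assms(2) le_Suc_ex by blast
    have "d * Q = d*j + d*m" "Q * ?b = j * ?b + m * ?b" using m by (simp_all add: algebra_simps)
    moreover have "m * ?b \<le> d * m" using False by (simp add: mult.commute)
    ultimately show ?thesis using h by linarith
  qed
qed

lemma lookup_CC_evar:
  assumes "\<forall>v\<ge>3. Poly_Mapping.lookup \<alpha> v = 0" "j \<le> Q"
  shows "Poly_Mapping.lookup (CC d Q \<alpha>) (evar j) = EE d \<alpha> j"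
  using assms by (cases j) (auto simp: lookup_CC evar_def EE_def numeral_2_eq_2)

lemma lookup_CC_low:
  "v < 3 \<Longrightarrow> Poly_Mapping.lookup (CC d Q \<alpha>) v = Poly_Mapping.lookup \<alpha> v"
  by (simp add: lookup_CC)

lemma inj_CC: "inj_on (CC d Q) S"
proof
  fix x y assume "CC d Q x = CC d Q y"
  hence e: "\<And>v. Poly_Mapping.lookup (CC d Q x) v = Poly_Mapping.lookup (CC d Q y) v" by simp
  have "Poly_Mapping.lookup x 0 = Poly_Mapping.lookup y 0" "Poly_Mapping.lookup x 2 = Poly_Mapping.lookup y 2"
    using e[of 0] e[of 2] by (simp_all add: lookup_CC_low)
  hence "EE d x = EE d y" by (simp add: EE_def fun_eq_iff)
  hence "Poly_Mapping.lookup x v = Poly_Mapping.lookup y v" for v using e[of v] by (simp add: lookup_CC split: if_splits)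
  then show "x = y" by (simp add: poly_mapping_eqI)
qed

lemma CC_step:
  assumes "\<forall>v\<ge>3. Poly_Mapping.lookup \<alpha> v = 0"
    and v1: "d * Suc Q \<le> Poly_Mapping.lookup \<alpha> 2 + Suc Q * Poly_Mapping.lookup \<alpha> 0"
    and v0: "d * Q \<le> Poly_Mapping.lookup \<alpha> 2 + Q * Poly_Mapping.lookup \<alpha> 0"
  shows "(CC d Q \<alpha> + Poly_Mapping.single (evar (Suc Q))
        (Poly_Mapping.lookup (CC d Q \<alpha>) (evar (Suc Q - 1)) + Poly_Mapping.lookup (CC d Q \<alpha>) 0))
      - Poly_Mapping.single (evar (Suc Q)) d = CC d (Suc Q) \<alpha>"
proof (rule poly_mapping_eqI)
  fix v
  have l1: "Poly_Mapping.lookup (CC d Q \<alpha>) (evar (Suc Q - 1)) = EE d \<alpha> Q"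
    using lookup_CC_evar[OF assms(1), of Q Q d] by simp
  have l0: "Poly_Mapping.lookup (CC d Q \<alpha>) 0 = Poly_Mapping.lookup \<alpha> 0" by (simp add: lookup_CC_low)
  have ee: "EE d \<alpha> Q + Poly_Mapping.lookup \<alpha> 0 - d = EE d \<alpha> (Suc Q)"
    using v0 v1 unfolding EE_def by (simp add: algebra_simps)
  show "Poly_Mapping.lookup (CC d Q \<alpha> + Poly_Mapping.single (evar (Suc Q))
        (Poly_Mapping.lookup (CC d Q \<alpha>) (evar (Suc Q - 1)) + Poly_Mapping.lookup (CC d Q \<alpha>) 0)
      - Poly_Mapping.single (evar (Suc Q)) d) v = Poly_Mapping.lookup (CC d (Suc Q) \<alpha>) v"
    using assms(1) ee
    by (cases "v = Q + 3"; cases Q) (auto simp: lookup_minus lookup_add lookup_single when_def l1 l0 lookup_CC evar_def numeral_2_eq_2 EE_def)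
qed

lemma valid_mono: "valid d Q h \<Longrightarrow> j \<le> Q \<Longrightarrow> valid d j h"
  using valid_le by (auto simp: valid_def)

lemma chain_keys:
  assumes "valid d Q h"
  shows "Poly_Mapping.keys (chain d h Q) = CC d Q ` Poly_Mapping.keys h"
  using assms
proof (induction Q)
  case 0
  have "CC d 0 \<alpha> = \<alpha>" for \<alpha> by (simp add: CC_def)
  then show ?case by simp
next
  case (Suc Q)
  have vQ: "valid d Q h" using Suc.prems valid_mono by auto
  have IH: "Poly_Mapping.keys (chain d h Q) = CC d Q ` Poly_Mapping.keys h" using Suc.IH vQ by blast
  let ?T = "\<lambda>\<alpha>. (\<alpha> + Poly_Mapping.single (evar (Suc Q))
        (Poly_Mapping.lookup \<alpha> (evar (Suc Q - 1)) + Poly_Mapping.lookup \<alpha> 0))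
      - Poly_Mapping.single (evar (Suc Q)) d"
  have Teq: "?T (CC d Q \<alpha>) = CC d (Suc Q) \<alpha>" if "\<alpha> \<in> Poly_Mapping.keys h" for \<alpha>
    using CC_step[of \<alpha> d Q] Suc.prems vQ that by (auto simp: valid_def)
  have img: "?T ` (CC d Q ` Poly_Mapping.keys h) = CC d (Suc Q) ` Poly_Mapping.keys h"
    using Teq by (force simp: image_comp)
  have inj: "inj_on ?T (CC d Q ` Poly_Mapping.keys h)"
  proof (rule inj_onI)
    fix x y assume x: "x \<in> CC d Q ` Poly_Mapping.keys h" and y: "y \<in> CC d Q ` Poly_Mapping.keys h"
      and e: "?T x = ?T y"
    obtain a where a: "a \<in> Poly_Mapping.keys h" "x = CC d Q a" using x by blast
    obtain b where b: "b \<in> Poly_Mapping.keys h" "y = CC d Q b" using y by blast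
    have "CC d (Suc Q) a = CC d (Suc Q) b" using e a b Teq by simp
    hence "a = b" using inj_CC[of d "Suc Q" UNIV] by (auto dest: injD)
    then show "x = y" using a b by simp
  qed
  have "Poly_Mapping.keys (chain d h (Suc Q)) = ?T ` Poly_Mapping.keys (chain d h Q)"
    unfolding chain.simps blowup_step_def by (rule remap_keys, simp only: IH, rule inj)
  then show ?case using IH img by simp
qed


lemma valid_from_stop:
  assumes supp: "\<forall>\<alpha>\<in>Poly_Mapping.keys h. \<forall>v\<ge>3. Poly_Mapping.lookup \<alpha> v = 0"
    and ns: "\<forall>q<P. \<forall>\<sigma><d. Fnz h \<sigma> \<longrightarrow> \<not> mu d h q \<sigma> < d - \<sigma>"
  shows "valid d P h"
proof -
  have "Q \<le> P \<longrightarrow> valid d Q h" for Q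
  proof (induction Q)
    case 0
    then show ?case using supp by (simp add: valid_def)
  next
    case (Suc Q)
    show ?case
    proof
      assume QP: "Suc Q \<le> P"
      have vQ: "valid d Q h" using Suc QP by simp
      have "d * Suc Q \<le> Poly_Mapping.lookup \<alpha> 2 + Suc Q * Poly_Mapping.lookup \<alpha> 0"
        if \<alpha>: "\<alpha> \<in> Poly_Mapping.keys h" for \<alpha>
      proof -
        let ?a = "Poly_Mapping.lookup \<alpha> 2" and ?b = "Poly_Mapping.lookup \<alpha> 0"
        have v0: "d * Q \<le> ?a + Q * ?b" using vQ \<alpha> by (auto simp: valid_def)
        show ?thesis
        proof (cases "d \<le> ?b")
          case True
          then show ?thesis by (metis mult.commute mult_le_mono1 trans_le_add2)
        next
          case False
          have fnz: "Fnz h ?b" unfolding Fnz_def using \<alpha> by blast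
          have mu: "\<not> mu d h Q ?b < d - ?b" using ns QP False fnz by auto
          have sup3: "\<forall>v\<ge>3. Poly_Mapping.lookup \<alpha> v = 0" using supp \<alpha> by blast
          have mem: "CC d Q \<alpha> \<in> {\<beta>\<in>Poly_Mapping.keys (chain d h Q). Poly_Mapping.lookup \<beta> 0 = ?b}"
            using chain_keys[OF vQ] \<alpha> by (simp add: lookup_CC_low)
          have "mu d h Q ?b \<le> Poly_Mapping.lookup (CC d Q \<alpha>) (evar Q)"
            unfolding mu_def using mem by (intro Min_le) auto
          also have "\<dots> = EE d \<alpha> Q" using lookup_CC_evar[OF sup3, of Q Q d] by simp
          finally have "d - ?b \<le> ?a + Q * ?b - d * Q" using mu unfolding EE_def by simp
          then show ?thesis using v0 False by (simp add: algebra_simps)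
        qed
      qed
      then show "valid d (Suc Q) h" using supp by (auto simp: valid_def)
    qed
  qed
  then show ?thesis by simp
qed

lemma valid_add: "valid d Q p \<Longrightarrow> valid d Q q \<Longrightarrow> valid d Q (p + q)"
  unfolding valid_def using keys_add[of p q] by blast

lemma valid_mult:
  assumes "valid d1 Q p" "valid d2 Q q"
  shows "valid (d1 + d2) Q (p * q)"
  unfolding valid_def
proof
  fix \<gamma> assume "\<gamma> \<in> Poly_Mapping.keys (p * q)"
  then obtain \<alpha> \<beta> where ab: "\<gamma> = \<alpha> + \<beta>" "\<alpha> \<in> Poly_Mapping.keys p" "\<beta> \<in> Poly_Mapping.keys q"
    using keys_mult[of p q] by blast
  show "(\<forall>v\<ge>3. Poly_Mapping.lookup \<gamma> v = 0) \<and>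
         (d1 + d2) * Q \<le> Poly_Mapping.lookup \<gamma> 2 + Q * Poly_Mapping.lookup \<gamma> 0"
  proof -
    have p: "(\<forall>v\<ge>3. Poly_Mapping.lookup \<alpha> v = 0)" "d1 * Q \<le> Poly_Mapping.lookup \<alpha> 2 + Q * Poly_Mapping.lookup \<alpha> 0"
      using assms(1) ab(2) unfolding valid_def by auto
    have q: "(\<forall>v\<ge>3. Poly_Mapping.lookup \<beta> v = 0)" "d2 * Q \<le> Poly_Mapping.lookup \<beta> 2 + Q * Poly_Mapping.lookup \<beta> 0"
      using assms(2) ab(3) unfolding valid_def by auto
    show ?thesis using p q ab(1) by (simp add: lookup_add algebra_simps)
  qed
qed

lemma valid_numeral: "valid 0 Q (numeral n :: mpoly)"
proof -
  have e: "(numeral n :: mpoly) = Poly_Mapping.single 0 (numeral n)" by simp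
  have "Poly_Mapping.keys (numeral n :: mpoly) \<subseteq> {0}"
    by (subst e) (simp del: single_numeral)
  then show ?thesis unfolding valid_def by auto
qed

lemma valid_Disc:
  assumes "valid 4 Q f" "valid 6 Q g"
  shows "valid 12 Q (Disc f g)"
proof -
  have "valid (0 + (4 + 4 + 4)) Q (4 * (f * f * f))"
    using assms by (intro valid_mult valid_numeral) auto
  moreover have "valid (0 + (6 + 6)) Q (27 * (g * g))"
    using assms by (intro valid_mult valid_numeral) auto
  ultimately show ?thesis unfolding Disc_def
    by (simp add: power3_eq_cube power2_eq_square valid_add)
qed

definition BB :: "nat \<Rightarrow> (nat \<Rightarrow>\<^sub>0 nat) \<Rightarrow> (nat \<Rightarrow>\<^sub>0 nat)" where
  "BB k \<alpha> = \<alpha> + Poly_Mapping.single 2 ((k - 1) * Poly_Mapping.lookup \<alpha> 2)"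

lemma bc_remap: "base_change k h = remap (BB k) h"
  unfolding base_change_def BB_def by simp

lemma BB_add: "BB k (a + b) = BB k a + BB k b"
  unfolding BB_def by (simp add: lookup_add algebra_simps single_add)

lemma BB_zero: "BB k 0 = 0" unfolding BB_def by simp

lemma lookup_BB: "Poly_Mapping.lookup (BB k \<alpha>) v = (if v = 2 then Poly_Mapping.lookup \<alpha> 2 + (k-1) * Poly_Mapping.lookup \<alpha> 2 else Poly_Mapping.lookup \<alpha> v)"
  unfolding BB_def by (simp add: lookup_add lookup_single when_def)

lemma lookup_BB2: "0 < k \<Longrightarrow> Poly_Mapping.lookup (BB k \<alpha>) 2 = k * Poly_Mapping.lookup \<alpha> 2"
proof -
  assume k: "0 < k"
  have "Poly_Mapping.lookup \<alpha> 2 + (k - 1) * Poly_Mapping.lookup \<alpha> 2 = (1 + (k-1)) * Poly_Mapping.lookup \<alpha> 2"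
    by (simp add: algebra_simps)
  also have "1 + (k - 1) = k" using k by simp
  finally show ?thesis by (simp add: lookup_BB)
qed

lemma bc_Disc: "base_change k (Disc f g) = Disc (base_change k f) (base_change k g)"
  unfolding bc_remap Disc_def
  by (simp only: power3_eq_cube power2_eq_square remap_add remap_mult[OF BB_add] remap_numeral[of "BB k", OF BB_zero])

lemma inj_BB: assumes "0 < k" shows "inj_on (BB k) S"
proof
  fix x y assume e: "BB k x = BB k y"
  have "Poly_Mapping.lookup x v = Poly_Mapping.lookup y v" for v
  proof (cases "v = 2")
    case True
    have "Poly_Mapping.lookup (BB k x) 2 = Poly_Mapping.lookup (BB k y) 2" using e by simp
    hence "k * Poly_Mapping.lookup x 2 = k * Poly_Mapping.lookup y 2" using assms
      by (simp add: lookup_BB2)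
    then show ?thesis using True assms by simp
  next
    case False
    then show ?thesis using arg_cong[OF e, of "\<lambda>p. Poly_Mapping.lookup p v"] by (simp add: lookup_BB)
  qed
  then show "x = y" by (simp add: poly_mapping_eqI)
qed

lemma keys_bc: "0 < k \<Longrightarrow> Poly_Mapping.keys (base_change k h) = BB k ` Poly_Mapping.keys h"
  unfolding bc_remap by (rule remap_keys, rule inj_BB)


lemma valid_bc:
  assumes "valid d Q h" "0 < k"
  shows "valid d (k * Q) (base_change k h)"
  unfolding valid_def keys_bc[OF assms(2)]
proof
  fix \<gamma> assume "\<gamma> \<in> BB k ` Poly_Mapping.keys h"
  then obtain \<alpha> where a: "\<alpha> \<in> Poly_Mapping.keys h" "\<gamma> = BB k \<alpha>" by blast
  have v: "(\<forall>v\<ge>3. Poly_Mapping.lookup \<alpha> v = 0)" "d * Q \<le> Poly_Mapping.lookup \<alpha> 2 + Q * Poly_Mapping.lookup \<alpha> 0"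
    using assms(1) a by (auto simp: valid_def)
  have "k * (d * Q) \<le> k * (Poly_Mapping.lookup \<alpha> 2 + Q * Poly_Mapping.lookup \<alpha> 0)"
    using v(2) by simp
  then show "(\<forall>v\<ge>3. Poly_Mapping.lookup \<gamma> v = 0) \<and> d * (k * Q) \<le> Poly_Mapping.lookup \<gamma> 2 + k * Q * Poly_Mapping.lookup \<gamma> 0"
    using v(1) a(2) assms(2) by (auto simp: lookup_BB lookup_BB2 algebra_simps)
qed

definition NN :: "nat \<Rightarrow> mpoly \<Rightarrow> (nat \<Rightarrow>\<^sub>0 nat)" where
  "NN Q D = (\<Sum>q\<le>Q. Poly_Mapping.single (evar q) (nvec D q))"

lemma lookup_NN: "Poly_Mapping.lookup (NN Q D) v = (if 2 \<le> v \<and> v \<le> Q + 2 then nvec D (v - 2) else 0)"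
proof (cases "2 \<le> v \<and> v \<le> Q + 2")
  case True
  have vv: "evar (v - 2) = v" unfolding evar_def using True by arith
  have "(\<Sum>q\<le>Q. Poly_Mapping.lookup (Poly_Mapping.single (evar q) (nvec D q)) v)
      = (\<Sum>q\<in>{v-2}. Poly_Mapping.lookup (Poly_Mapping.single (evar q) (nvec D q)) v)"
    using True by (intro sum.mono_neutral_right) (auto simp: lookup_single evar_def when_def)
  then show ?thesis using True vv by (simp add: NN_def lookup_sum)
next
  case False
  then show ?thesis by (auto simp: NN_def lookup_sum lookup_single evar_def when_def intro!: sum.neutral)
qed

lemma nvec_le: "\<beta> \<in> Poly_Mapping.keys D \<Longrightarrow> nvec D q \<le> Poly_Mapping.lookup \<beta> (evar q)"
  unfolding nvec_def by (intro Min_le) auto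

lemma NN_le: assumes "\<beta> \<in> Poly_Mapping.keys D" shows "Poly_Mapping.lookup (NN Q D) v \<le> Poly_Mapping.lookup \<beta> v"
proof (cases "2 \<le> v \<and> v \<le> Q + 2")
  case True
  hence "Suc (Suc (v - 2)) = v" by arith
  then show ?thesis using True nvec_le[OF assms, of "v - 2"] by (auto simp: lookup_NN evar_def)
qed (auto simp: lookup_NN)

lemma keys_Dprime: "Poly_Mapping.keys (Dprime Q D) = (\<lambda>\<beta>. \<beta> - NN Q D) ` Poly_Mapping.keys D"
  unfolding Dprime_def NN_def[symmetric]
proof (rule remap_keys, rule inj_onI)
  fix x y assume x: "x \<in> Poly_Mapping.keys D" and y: "y \<in> Poly_Mapping.keys D" and e: "x - NN Q D = y - NN Q D"
  have "Poly_Mapping.lookup x v = Poly_Mapping.lookup y v" for v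
    using arg_cong[OF e, of "\<lambda>p. Poly_Mapping.lookup p v"] NN_le[OF x, of Q v] NN_le[OF y, of Q v]
    by (simp add: lookup_minus)
  then show "x = y" by (simp add: poly_mapping_eqI)
qed

lemma lookup_Dp: "q \<le> Q \<Longrightarrow> Poly_Mapping.lookup (\<beta> - NN Q D) (evar q) = Poly_Mapping.lookup \<beta> (evar q) - nvec D q"
  by (simp add: lookup_minus lookup_NN evar_def)

lemma nvec_chain:
  assumes "valid d Q h" "q \<le> Q"
  shows "nvec (chain d h Q) q = Min ((\<lambda>\<alpha>. EE d \<alpha> q) ` Poly_Mapping.keys h)"
proof -
  have "nvec (chain d h Q) q = Min ((\<lambda>\<beta>. Poly_Mapping.lookup \<beta> (evar q)) ` CC d Q ` Poly_Mapping.keys h)"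
    unfolding nvec_def chain_keys[OF assms(1)] ..
  also have "\<dots> = Min ((\<lambda>\<alpha>. EE d \<alpha> q) ` Poly_Mapping.keys h)"
    unfolding image_comp
    by (rule arg_cong[where f=Min], rule image_cong, simp)
       (use assms in \<open>auto simp: valid_def intro: lookup_CC_evar\<close>)
  finally show ?thesis .
qed


definition Mn :: "('a \<Rightarrow> real) \<Rightarrow> ('a \<Rightarrow> real) \<Rightarrow> 'a set \<Rightarrow> real \<Rightarrow> real" where
  "Mn c d I x = Min ((\<lambda>\<alpha>. c \<alpha> * x + d \<alpha>) ` I)"

definition Xc :: "('a \<Rightarrow> real) \<Rightarrow> ('a \<Rightarrow> real) \<Rightarrow> 'a set \<Rightarrow> real set" where
  "Xc c d I = {x. \<exists>\<alpha>\<in>I. \<exists>\<beta>\<in>I. (c \<alpha>, d \<alpha>) \<noteq> (c \<beta>, d \<beta>) \<and> c \<alpha> * x + d \<alpha> = c \<beta> * x + d \<beta>}"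

lemma affine_root:
  fixes c d z w :: real
  assumes "c*z + d > 0" "c*w + d < 0"
  shows "\<exists>t. c*t + d = 0 \<and> min z w < t \<and> t < max z w"
proof -
  have c: "c \<noteq> 0" using assms by auto
  let ?t = "-d/c"
  have e: "c * ?t + d = 0" using c by simp
  have "min z w < ?t \<and> ?t < max z w"
  proof (cases "c > 0")
    case True
    have "w < ?t" using assms(2) True by (simp add: field_simps)
    moreover have "?t < z" using assms(1) True by (simp add: field_simps)
    ultimately show ?thesis by auto
  next
    case False
    hence cn: "c < 0" using c by simp
    have "?t < w" using assms(2) cn by (simp add: field_simps)
    moreover have "z < ?t" using assms(1) cn by (simp add: field_simps)
    ultimately show ?thesis by auto
  qed
  with e show ?thesis by blast
qed

context
  fixes c d :: "'a \<Rightarrow> real" and I :: "'a set"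
  assumes fin: "finite I" and ne: "I \<noteq> {}"
begin

lemma Mn_le: "\<alpha> \<in> I \<Longrightarrow> Mn c d I x \<le> c \<alpha> * x + d \<alpha>"
  unfolding Mn_def using fin by (intro Min_le) auto

lemma Mn_ex: "\<exists>\<alpha>\<in>I. Mn c d I x = c \<alpha> * x + d \<alpha>"
proof -
  have "Mn c d I x \<in> (\<lambda>\<alpha>. c \<alpha> * x + d \<alpha>) ` I"
    unfolding Mn_def using fin ne by (intro Min_in) auto
  then show ?thesis by auto
qed

lemma Mn_eqI: "\<alpha> \<in> I \<Longrightarrow> (\<And>\<beta>. \<beta> \<in> I \<Longrightarrow> c \<alpha> * x + d \<alpha> \<le> c \<beta> * x + d \<beta>) \<Longrightarrow> Mn c d I x = c \<alpha> * x + d \<alpha>"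
  by (metis Mn_ex Mn_le antisym)

lemma Xc_finite: "finite (Xc c d I)"
proof -
  have "Xc c d I \<subseteq> (\<lambda>(\<alpha>,\<beta>). (d \<beta> - d \<alpha>) / (c \<alpha> - c \<beta>)) ` (I \<times> I)"
  proof
    fix x assume "x \<in> Xc c d I"
    then obtain \<alpha> \<beta> where ab: "\<alpha>\<in>I" "\<beta>\<in>I" "(c \<alpha>, d \<alpha>) \<noteq> (c \<beta>, d \<beta>)" "c \<alpha> * x + d \<alpha> = c \<beta> * x + d \<beta>"
      unfolding Xc_def by blast
    have "c \<alpha> \<noteq> c \<beta>" using ab by auto
    hence "x = (d \<beta> - d \<alpha>) / (c \<alpha> - c \<beta>)" using ab(4) by (simp add: field_simps)
    then show "x \<in> (\<lambda>(\<alpha>,\<beta>). (d \<beta> - d \<alpha>) / (c \<alpha> - c \<beta>)) ` (I \<times> I)" using ab by force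
  qed
  then show ?thesis using fin by (meson finite_SigmaI finite_imageI finite_subset)
qed

lemma Xc_rat:
  assumes "\<And>\<alpha>. \<alpha> \<in> I \<Longrightarrow> c \<alpha> \<in> \<rat>" "\<And>\<alpha>. \<alpha> \<in> I \<Longrightarrow> d \<alpha> \<in> \<rat>"
  shows "Xc c d I \<subseteq> \<rat>"
proof
  fix x assume "x \<in> Xc c d I"
  then obtain \<alpha> \<beta> where ab: "\<alpha>\<in>I" "\<beta>\<in>I" "(c \<alpha>, d \<alpha>) \<noteq> (c \<beta>, d \<beta>)" "c \<alpha> * x + d \<alpha> = c \<beta> * x + d \<beta>"
    unfolding Xc_def by blast
  have "c \<alpha> \<noteq> c \<beta>" using ab by auto
  hence "x = (d \<beta> - d \<alpha>) / (c \<alpha> - c \<beta>)" using ab(4) by (simp add: field_simps)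
  then show "x \<in> \<rat>" using assms ab by simp
qed

lemma beaten_cross:
  assumes a: "\<alpha> \<in> I" "Mn c d I z = c \<alpha> * z + d \<alpha>" and b: "\<beta> \<in> I"
    and lt: "c \<beta> * w + d \<beta> < c \<alpha> * w + d \<alpha>"
  shows "\<exists>t. t \<in> Xc c d I \<and> (t = z \<or> (min z w < t \<and> t < max z w))"
proof -
  have ge: "c \<beta> * z + d \<beta> \<ge> c \<alpha> * z + d \<alpha>" using Mn_le[OF b, of z] a by simp
  have ne: "(c \<alpha>, d \<alpha>) \<noteq> (c \<beta>, d \<beta>)" using lt by auto
  show ?thesis
  proof (cases "c \<beta> * z + d \<beta> = c \<alpha> * z + d \<alpha>")
    case True
    hence "z \<in> Xc c d I" unfolding Xc_def using a b ne by (metis (mono_tags, lifting) mem_Collect_eq)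
    moreover have "z \<noteq> w" using True lt by auto
    ultimately show ?thesis by (intro exI[of _ z]) auto
  next
    case False
    hence "(c \<beta> - c \<alpha>) * z + (d \<beta> - d \<alpha>) > 0" using ge by (simp add: algebra_simps)
    moreover have "(c \<beta> - c \<alpha>) * w + (d \<beta> - d \<alpha>) < 0" using lt by (simp add: algebra_simps)
    ultimately obtain t where t: "(c \<beta> - c \<alpha>) * t + (d \<beta> - d \<alpha>) = 0" "min z w < t" "t < max z w"
      using affine_root by blast
    have "c \<alpha> * t + d \<alpha> = c \<beta> * t + d \<beta>" using t(1) by (simp add: algebra_simps)
    hence "t \<in> Xc c d I" unfolding Xc_def using a(1) b ne by blast
    then show ?thesis using t by (intro exI[of _ t]) auto
  qed
qed

lemma Mn_concave: "concave_on S (Mn c d I)" if "convex S"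
  unfolding concave_on_iff
proof (intro conjI that ballI allI impI)
  fix x y u v :: real assume uv: "u \<ge> 0" "v \<ge> 0" "u + v = 1"
  obtain \<alpha> where a: "\<alpha> \<in> I" "Mn c d I (u *\<^sub>R x + v *\<^sub>R y) = c \<alpha> * (u *\<^sub>R x + v *\<^sub>R y) + d \<alpha>"
    using Mn_ex by blast
  have "u * Mn c d I x + v * Mn c d I y \<le> u * (c \<alpha> * x + d \<alpha>) + v * (c \<alpha> * y + d \<alpha>)"
    using Mn_le[OF a(1)] uv by (intro add_mono mult_left_mono) auto
  also have "\<dots> = c \<alpha> * (u *\<^sub>R x + v *\<^sub>R y) + d \<alpha>"
  proof -
    have "u * (c \<alpha> * x + d \<alpha>) + v * (c \<alpha> * y + d \<alpha>) = c \<alpha> * (u *\<^sub>R x + v *\<^sub>R y) + (u+v) * d \<alpha>"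
      by (simp add: algebra_simps)
    then show ?thesis using uv(3) by simp
  qed
  finally show "u * Mn c d I x + v * Mn c d I y \<le> Mn c d I (u *\<^sub>R x + v *\<^sub>R y)" using a by simp
qed

lemma Mn_segment:
  assumes "x < y" "{x<..<y} \<inter> Xc c d I = {}"
  shows "\<exists>\<alpha>\<in>I. \<forall>w\<in>{x..y}. Mn c d I w = c \<alpha> * w + d \<alpha>"
proof -
  let ?m = "(x+y)/2"
  obtain \<alpha> where a: "\<alpha> \<in> I" "Mn c d I ?m = c \<alpha> * ?m + d \<alpha>" using Mn_ex by blast
  have "Mn c d I w = c \<alpha> * w + d \<alpha>" if w: "w \<in> {x..y}" for w
  proof (rule Mn_eqI[OF a(1)], rule ccontr)
    fix \<beta> assume b: "\<beta> \<in> I" "\<not> c \<alpha> * w + d \<alpha> \<le> c \<beta> * w + d \<beta>"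
    have lt: "c \<beta> * w + d \<beta> < c \<alpha> * w + d \<alpha>" using b(2) by simp
    then obtain t where "t \<in> Xc c d I" "t = ?m \<or> (min ?m w < t \<and> t < max ?m w)"
      using beaten_cross[OF a b(1) lt] by auto
    moreover have "t \<in> {x<..<y}" using calculation w assms(1) by (auto simp: min_def max_def split: if_splits)
    ultimately show False using assms(2) by blast
  qed
  then show ?thesis using a(1) by blast
qed

lemma Mn_pwl:
  assumes "a < b"
  shows "piecewise_linear_on a b (Mn c d I)"
  unfolding piecewise_linear_on_def
proof (intro exI[of _ "{a,b} \<union> (Xc c d I \<inter> {a..b})"] conjI ballI impI)
  show "finite ({a, b} \<union> (Xc c d I \<inter> {a..b}))" using Xc_finite by simp
  show "{a, b} \<union> Xc c d I \<inter> {a..b} \<subseteq> {a..b}" using assms by auto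
  fix x y assume xy: "x \<in> {a, b} \<union> Xc c d I \<inter> {a..b}" "y \<in> {a, b} \<union> Xc c d I \<inter> {a..b}"
    "x < y \<and> {x<..<y} \<inter> ({a, b} \<union> Xc c d I \<inter> {a..b}) = {}"
  have sub: "{x<..<y} \<subseteq> {a..b}" using xy assms by auto
  have "{x<..<y} \<inter> Xc c d I = {}" using xy(3) sub by blast
  then obtain \<alpha> where "\<alpha>\<in>I" "\<forall>w\<in>{x..y}. Mn c d I w = c \<alpha> * w + d \<alpha>"
    using Mn_segment xy(3) by blast
  then show "\<exists>c' d'. \<forall>z\<in>{x..y}. Mn c d I z = c' * z + d'" by blast
qed auto

lemma Mn_ll_notX:
  assumes "x \<notin> Xc c d I"
  shows "locally_linear_at (Mn c d I) x"
proof -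
  obtain \<alpha> where a: "\<alpha> \<in> I" "Mn c d I x = c \<alpha> * x + d \<alpha>" using Mn_ex by blast
  define \<epsilon> where "\<epsilon> = (if Xc c d I = {} then 1 else Min ((\<lambda>y. \<bar>y - x\<bar>) ` Xc c d I))"
  have ep: "\<epsilon> > 0"
  proof (cases "Xc c d I = {}")
    case False
    have "\<epsilon> \<in> (\<lambda>y. \<bar>y - x\<bar>) ` Xc c d I" unfolding \<epsilon>_def using False Xc_finite by simp
    then show ?thesis using assms by auto
  qed (simp add: \<epsilon>_def)
  have epl: "\<epsilon> \<le> \<bar>t - x\<bar>" if "t \<in> Xc c d I" for t
    unfolding \<epsilon>_def using that Xc_finite by auto
  have "Mn c d I z = c \<alpha> * z + d \<alpha>" if z: "\<bar>z - x\<bar> < \<epsilon>" for z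
  proof (rule Mn_eqI[OF a(1)], rule ccontr)
    fix \<beta> assume b: "\<beta> \<in> I" "\<not> c \<alpha> * z + d \<alpha> \<le> c \<beta> * z + d \<beta>"
    have lt: "c \<beta> * z + d \<beta> < c \<alpha> * z + d \<alpha>" using b(2) by simp
    then obtain t where t: "t \<in> Xc c d I" "t = x \<or> (min x z < t \<and> t < max x z)"
      using beaten_cross[OF a b(1) lt] by auto
    have "t \<noteq> x" using t assms by auto
    hence "\<bar>t - x\<bar> < \<epsilon>" using t z by (auto simp: min_def max_def split: if_splits)
    then show False using epl[OF t(1)] by simp
  qed
  then show ?thesis unfolding locally_linear_at_def using ep by blast
qed

lemma Mn_ll_char:
  assumes ll: "locally_linear_at (Mn c d I) x" and a: "\<alpha> \<in> I" "Mn c d I x = c \<alpha> * x + d \<alpha>"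
  shows "\<exists>\<epsilon>>0. \<forall>z. \<bar>z - x\<bar> < \<epsilon> \<longrightarrow> Mn c d I z = c \<alpha> * z + d \<alpha>"
proof -
  obtain \<epsilon> c0 d0 where e: "\<epsilon> > 0" "\<forall>z. \<bar>z - x\<bar> < \<epsilon> \<longrightarrow> Mn c d I z = c0 * z + d0"
    using ll unfolding locally_linear_at_def by blast
  have x0: "c0 * x + d0 = c \<alpha> * x + d \<alpha>" using e a by simp
  have le: "c0 * z + d0 \<le> c \<alpha> * z + d \<alpha>" if "\<bar>z - x\<bar> < \<epsilon>" for z
    using e that Mn_le[OF a(1), of z] by simp
  have "c0 * (x + \<epsilon>/2) + d0 \<le> c \<alpha> * (x + \<epsilon>/2) + d \<alpha>" using le[of "x+\<epsilon>/2"] e by simp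
  hence c1: "c0 * (\<epsilon>/2) \<le> c \<alpha> * (\<epsilon>/2)" using x0 by (simp add: algebra_simps)
  have "c0 * (x - \<epsilon>/2) + d0 \<le> c \<alpha> * (x - \<epsilon>/2) + d \<alpha>" using le[of "x-\<epsilon>/2"] e by simp
  hence c2: "c \<alpha> * (\<epsilon>/2) \<le> c0 * (\<epsilon>/2)" using x0 by (simp add: algebra_simps)
  have "c0 = c \<alpha>" using c1 c2 e(1) by (metis antisym half_gt_zero mult_le_cancel_right_pos)
  hence "d0 = d \<alpha>" using x0 by simp
  then show ?thesis using e \<open>c0 = c \<alpha>\<close> by blast
qed

lemma Mn_right:
  assumes a: "\<alpha> \<in> I" "Mn c d I m = c \<alpha> * m + d \<alpha>" and mx: "m < x1"
    and ll: "\<forall>z\<in>{m..<x1}. locally_linear_at (Mn c d I) z"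
  shows "Mn c d I x1 = c \<alpha> * x1 + d \<alpha>"
proof (rule ccontr)
  assume nq: "Mn c d I x1 \<noteq> c \<alpha> * x1 + d \<alpha>"
  define R where "R = {\<beta>\<in>I. c \<beta> * x1 + d \<beta> < c \<alpha> * x1 + d \<alpha>}"
  have Rne: "R \<noteq> {}"
  proof -
    obtain \<beta> where "\<beta> \<in> I" "Mn c d I x1 = c \<beta> * x1 + d \<beta>" using Mn_ex by blast
    then show ?thesis using nq Mn_le[OF a(1), of x1] unfolding R_def by force
  qed
  have Rfin: "finite R" using fin unfolding R_def by simp
  define tt where "tt \<beta> = (d \<alpha> - d \<beta>) / (c \<beta> - c \<alpha>)" for \<beta>
  have Rprop: "c \<beta> < c \<alpha> \<and> m \<le> tt \<beta> \<and> tt \<beta> < x1 \<and> c \<beta> * tt \<beta> + d \<beta> = c \<alpha> * tt \<beta> + d \<alpha>"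
    if b: "\<beta> \<in> R" for \<beta>
  proof -
    have bI: "\<beta> \<in> I" and lt: "c \<beta> * x1 + d \<beta> < c \<alpha> * x1 + d \<alpha>" using b unfolding R_def by auto
    have ge: "c \<beta> * m + d \<beta> \<ge> c \<alpha> * m + d \<alpha>" using Mn_le[OF bI, of m] a by simp
    have "(c \<beta> - c \<alpha>) * (x1 - m) < 0" using ge lt by (simp add: algebra_simps)
    hence cl: "c \<beta> < c \<alpha>" using mx by (simp add: mult_less_0_iff)
    have cne: "c \<beta> - c \<alpha> < 0" using cl by simp
    have "m \<le> tt \<beta>" unfolding tt_def using ge cne by (simp add: le_divide_eq algebra_simps)
    moreover have "tt \<beta> < x1" unfolding tt_def using lt cne by (simp add: divide_less_eq algebra_simps)
    moreover have "c \<beta> * tt \<beta> + d \<beta> = c \<alpha> * tt \<beta> + d \<alpha>" unfolding tt_def using cne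
      by (simp add: field_simps)
    ultimately show ?thesis using cl by blast
  qed
  define ts where "ts = Min (tt ` R)"
  have "ts \<in> tt ` R" unfolding ts_def using Rne Rfin by (intro Min_in) auto
  then obtain \<beta>s where bs: "\<beta>s \<in> R" "ts = tt \<beta>s" by auto
  have tsle: "ts \<le> tt \<beta>" if "\<beta> \<in> R" for \<beta> unfolding ts_def using that Rfin by simp
  have amin: "Mn c d I ts = c \<alpha> * ts + d \<alpha>"
  proof (rule Mn_eqI[OF a(1)], rule ccontr)
    fix \<gamma> assume g: "\<gamma> \<in> I" "\<not> c \<alpha> * ts + d \<alpha> \<le> c \<gamma> * ts + d \<gamma>"
    have ge: "c \<gamma> * m + d \<gamma> \<ge> c \<alpha> * m + d \<alpha>" using Mn_le[OF g(1), of m] a by simp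
    have tsm: "m \<le> ts" "ts < x1" using Rprop[OF bs(1)] bs(2) by auto
    have "(c \<gamma> - c \<alpha>) * (ts - m) < 0" using ge g(2) by (simp add: algebra_simps)
    hence cl: "c \<gamma> < c \<alpha>" "m < ts" using tsm by (auto simp: mult_less_0_iff)
    have "(c \<gamma> - c \<alpha>) * (x1 - ts) < 0" using cl tsm by (simp add: mult_neg_pos)
    hence "\<gamma> \<in> R" using g unfolding R_def by (simp add: algebra_simps)
    hence "ts \<le> tt \<gamma>" by (rule tsle)
    moreover have "tt \<gamma> < ts"
    proof -
      have cne: "c \<gamma> - c \<alpha> < 0" using cl by simp
      show ?thesis unfolding tt_def using g(2) cne by (simp add: divide_less_eq algebra_simps)
    qed
    ultimately show False by simp
  qed
  have bsI: "\<beta>s \<in> I" using bs unfolding R_def by auto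
  have bmin: "Mn c d I ts = c \<beta>s * ts + d \<beta>s" using amin Rprop[OF bs(1)] bs(2) by simp
  have tsin: "ts \<in> {m..<x1}" using Rprop[OF bs(1)] bs(2) by auto
  obtain e1 where e1: "e1 > 0" "\<forall>z. \<bar>z - ts\<bar> < e1 \<longrightarrow> Mn c d I z = c \<alpha> * z + d \<alpha>"
    using Mn_ll_char[OF ll[rule_format, OF tsin] a(1) amin] by blast
  obtain e2 where e2: "e2 > 0" "\<forall>z. \<bar>z - ts\<bar> < e2 \<longrightarrow> Mn c d I z = c \<beta>s * z + d \<beta>s"
    using Mn_ll_char[OF ll[rule_format, OF tsin] bsI bmin] by blast
  define h where "h = min e1 e2 / 2"
  have h: "h > 0" "\<bar>(ts + h) - ts\<bar> < e1" "\<bar>(ts + h) - ts\<bar> < e2" using e1 e2 by (auto simp: h_def)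
  have "c \<alpha> * (ts + h) + d \<alpha> = c \<beta>s * (ts + h) + d \<beta>s" using e1(2) e2(2) h by metis
  moreover have "c \<alpha> * ts + d \<alpha> = c \<beta>s * ts + d \<beta>s" using amin bmin by simp
  ultimately have e3: "(c \<alpha> * (ts + h) + d \<alpha>) - (c \<alpha> * ts + d \<alpha>) = (c \<beta>s * (ts + h) + d \<beta>s) - (c \<beta>s * ts + d \<beta>s)"
    by simp
  have "c \<alpha> * h = c \<beta>s * h" using e3 by (simp add: algebra_simps)
  hence "c \<alpha> = c \<beta>s" using h(1) by simp
  then show False using Rprop[OF bs(1)] by simp
qed

end


lemma Mn_reflect: "Mn (\<lambda>\<alpha>. - c \<alpha>) d I x = Mn c d I (-x)"
  unfolding Mn_def by simp

lemma ll_reflect: "locally_linear_at F (-x) \<Longrightarrow> locally_linear_at (\<lambda>z. F (-z)) x"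
  unfolding locally_linear_at_def
proof (elim exE conjE)
  fix \<epsilon> c0 d0 assume e: "\<epsilon> > 0" "\<forall>z. \<bar>z - - x\<bar> < \<epsilon> \<longrightarrow> F z = c0 * z + d0"
  have "\<forall>z. \<bar>z - x\<bar> < \<epsilon> \<longrightarrow> F (-z) = (-c0) * z + d0"
  proof (intro allI impI)
    fix z assume "\<bar>z - x\<bar> < \<epsilon>"
    hence "\<bar>-z - - x\<bar> < \<epsilon>" by simp
    then show "F (-z) = (-c0) * z + d0" using e(2) by simp
  qed
  then show "\<exists>\<epsilon>>0. \<exists>c d. \<forall>z. \<bar>z - x\<bar> < \<epsilon> \<longrightarrow> F (- z) = c * z + d" using e(1) by blast
qed

lemma Mn_left:
  assumes fin: "finite I" and ne: "I \<noteq> {}"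
    and a: "\<alpha> \<in> I" "Mn c d I m = c \<alpha> * m + d \<alpha>" and mx: "x0 < m"
    and ll: "\<forall>z\<in>{x0<..m}. locally_linear_at (Mn c d I) z"
  shows "Mn c d I x0 = c \<alpha> * x0 + d \<alpha>"
proof -
  let ?c = "\<lambda>\<alpha>. - c \<alpha>"
  have a': "Mn ?c d I (-m) = ?c \<alpha> * (-m) + d \<alpha>" using a(2) by (simp add: Mn_reflect)
  have ll': "\<forall>z\<in>{-m..< -x0}. locally_linear_at (Mn ?c d I) z"
  proof
    fix z assume z: "z \<in> {-m..< -x0}"
    hence "-z \<in> {x0<..m}" by auto
    hence "locally_linear_at (Mn c d I) (- z)" using ll by blast
    hence "locally_linear_at (\<lambda>w. Mn c d I (- w)) z" by (rule ll_reflect)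
    moreover have "(\<lambda>w. Mn c d I (- w)) = Mn ?c d I" by (simp add: Mn_reflect fun_eq_iff)
    ultimately show "locally_linear_at (Mn ?c d I) z" by simp
  qed
  have "Mn ?c d I (-x0) = ?c \<alpha> * (-x0) + d \<alpha>"
    using Mn_right[OF fin ne a(1) a' _ ll'] mx by simp
  then show ?thesis by (simp add: Mn_reflect)
qed

lemma Mn_crit:
  assumes fin: "finite I" and ne: "I \<noteq> {}" and x: "x0 < x1"
  shows "(\<exists>\<alpha>\<in>I. Mn c d I x0 = c \<alpha> * x0 + d \<alpha> \<and> Mn c d I x1 = c \<alpha> * x1 + d \<alpha>)
     \<longleftrightarrow> (\<forall>z\<in>{x0<..<x1}. locally_linear_at (Mn c d I) z)"
proof
  assume "\<exists>\<alpha>\<in>I. Mn c d I x0 = c \<alpha> * x0 + d \<alpha> \<and> Mn c d I x1 = c \<alpha> * x1 + d \<alpha>"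
  then obtain \<alpha> where a: "\<alpha> \<in> I" "Mn c d I x0 = c \<alpha> * x0 + d \<alpha>" "Mn c d I x1 = c \<alpha> * x1 + d \<alpha>" by blast
  have seg: "Mn c d I w = c \<alpha> * w + d \<alpha>" if w: "x0 \<le> w" "w \<le> x1" for w
  proof (rule Mn_eqI[OF fin ne a(1)])
    fix \<beta> assume b: "\<beta> \<in> I"
    have d0: "c \<beta> * x0 + d \<beta> - (c \<alpha> * x0 + d \<alpha>) \<ge> 0" using Mn_le[OF fin ne b, where x=x0 and c=c and d=d] a by simp
    have d1: "c \<beta> * x1 + d \<beta> - (c \<alpha> * x1 + d \<alpha>) \<ge> 0" using Mn_le[OF fin ne b, where x=x1 and c=c and d=d] a by simp
    have eq: "(c \<beta> * w + d \<beta> - (c \<alpha> * w + d \<alpha>)) * (x1 - x0)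
      = (c \<beta> * x0 + d \<beta> - (c \<alpha> * x0 + d \<alpha>)) * (x1 - w) + (c \<beta> * x1 + d \<beta> - (c \<alpha> * x1 + d \<alpha>)) * (w - x0)"
      by (simp add: algebra_simps)
    have "0 \<le> (c \<beta> * w + d \<beta> - (c \<alpha> * w + d \<alpha>)) * (x1 - x0)"
      unfolding eq using d0 d1 w by (intro add_nonneg_nonneg mult_nonneg_nonneg) auto
    hence "0 \<le> c \<beta> * w + d \<beta> - (c \<alpha> * w + d \<alpha>)" using x by (simp add: zero_le_mult_iff)
    then show "c \<alpha> * w + d \<alpha> \<le> c \<beta> * w + d \<beta>" by simp
  qed
  show "\<forall>z\<in>{x0<..<x1}. locally_linear_at (Mn c d I) z"
  proof
    fix z assume z: "z \<in> {x0<..<x1}"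
    define \<epsilon> where "\<epsilon> = min (z - x0) (x1 - z)"
    have "\<epsilon> > 0" using z by (auto simp: \<epsilon>_def)
    moreover have "\<forall>w. \<bar>w - z\<bar> < \<epsilon> \<longrightarrow> Mn c d I w = c \<alpha> * w + d \<alpha>"
      using seg by (auto simp: \<epsilon>_def abs_less_iff)
    ultimately show "locally_linear_at (Mn c d I) z" unfolding locally_linear_at_def by blast
  qed
next
  assume ll: "\<forall>z\<in>{x0<..<x1}. locally_linear_at (Mn c d I) z"
  let ?m = "(x0 + x1) / 2"
  obtain \<alpha> where a: "\<alpha> \<in> I" "Mn c d I ?m = c \<alpha> * ?m + d \<alpha>" using Mn_ex[OF fin ne] by blast
  have r: "Mn c d I x1 = c \<alpha> * x1 + d \<alpha>"
    using Mn_right[OF fin ne a] x ll by auto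
  have l: "Mn c d I x0 = c \<alpha> * x0 + d \<alpha>"
    using Mn_left[OF fin ne a] x ll by auto
  show "\<exists>\<alpha>\<in>I. Mn c d I x0 = c \<alpha> * x0 + d \<alpha> \<and> Mn c d I x1 = c \<alpha> * x1 + d \<alpha>"
    using a(1) l r by blast
qed


lemma rat_denom_char:
  assumes "x \<in> \<rat>"
  shows "0 < rat_denom x \<and> (\<forall>j::nat. real j * x \<in> \<int> \<longleftrightarrow> rat_denom x dvd j)"
proof -
  obtain q where q: "x = of_rat q" using assms Rats_cases by blast
  have th: "(THE q. x = of_rat q) = q" using q by (rule the_equality) (simp add: q)
  obtain a b where ab: "quotient_of q = (a, b)" by (cases "quotient_of q")
  have bpos: "b > 0" using quotient_of_denom_pos[OF ab] .
  have cop: "coprime a b" using quotient_of_coprime[OF ab] .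
  have qd: "q = of_int a / of_int b" using quotient_of_div[OF ab] .
  have rd: "rat_denom x = nat b" unfolding rat_denom_def th ab by simp
  have xr: "x = real_of_int a / real_of_int b" using q qd by (simp add: of_rat_divide)
  have "real j * x \<in> \<int> \<longleftrightarrow> b dvd int j" for j
  proof
    assume "real j * x \<in> \<int>"
    then obtain n where n: "real j * x = of_int n" using Ints_cases by blast
    hence "real_of_int (int j * a) = real_of_int (n * b)" using xr bpos by (simp add: field_simps)
    hence "int j * a = n * b" using of_int_eq_iff by blast
    hence "b dvd int j * a" by simp
    then show "b dvd int j" using cop by (simp add: coprime_commute coprime_dvd_mult_left_iff)
  next
    assume "b dvd int j"
    then obtain m where m: "int j = b * m" by blast
    have rj: "real j = real_of_int b * real_of_int m"
    proof -
      have "real j = real_of_int (int j)" by simp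
      also have "\<dots> = real_of_int b * real_of_int m" using m by simp
      finally show ?thesis .
    qed
    have "real j * x = real_of_int (m * a)" using xr bpos rj
      by (simp add: field_simps)
    then show "real j * x \<in> \<int>" by simp
  qed
  moreover have "b dvd int j \<longleftrightarrow> nat b dvd j" for j
  proof -
    have "b dvd int j \<longleftrightarrow> int (nat b) dvd int j" using bpos by simp
    also have "\<dots> \<longleftrightarrow> nat b dvd j" by (rule int_dvd_int_iff)
    finally show ?thesis .
  qed
  ultimately show ?thesis using rd bpos by simp
qed

lemma lcm_part:
  fixes BP :: "real set"
  assumes fin: "finite BP" and rat: "BP \<subseteq> \<rat>"
  defines "L \<equiv> Lcm (rat_denom ` BP)"
  shows "0 < L" "\<And>j. (\<forall>x\<in>BP. real j * x \<in> \<int>) \<longleftrightarrow> L dvd j"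
proof -
  have pos: "\<And>x. x \<in> BP \<Longrightarrow> 0 < rat_denom x" using rat rat_denom_char by blast
  have "0 \<notin> rat_denom ` BP" using pos by (metis imageE less_irrefl)
  hence "L \<noteq> 0" unfolding L_def using fin by (subst Lcm_0_iff) auto
  then show "0 < L" by simp
  fix j
  show "(\<forall>x\<in>BP. real j * x \<in> \<int>) \<longleftrightarrow> L dvd j"
  proof
    assume h: "\<forall>x\<in>BP. real j * x \<in> \<int>"
    show "L dvd j" unfolding L_def
      using h rat rat_denom_char by (intro Lcm_least) blast
  next
    assume "L dvd j"
    then show "\<forall>x\<in>BP. real j * x \<in> \<int>" unfolding L_def
      using rat rat_denom_char by (meson dvd_Lcm dvd_trans image_eqI subsetD)
  qed
qed

lemma k0_part:
  fixes BP :: "real set" and k0 k :: nat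
  assumes fin: "finite BP" and rat: "BP \<subseteq> \<rat>"
    and k0_def: "k0 = (LEAST j::nat. 0 < j \<and> (\<forall>x\<in>BP. real j * x \<in> \<int>))"
  shows "((\<forall>x\<in>BP. real k * x \<in> \<int>) \<longleftrightarrow> k0 dvd k) \<and> k0 = Lcm (rat_denom ` BP)"
proof -
  let ?L = "Lcm (rat_denom ` BP)"
  note l = lcm_part[OF fin rat]
  have "k0 = ?L" unfolding k0_def
  proof (rule Least_equality)
    show "0 < ?L \<and> (\<forall>x\<in>BP. real ?L * x \<in> \<int>)" using l by simp
    fix y assume "0 < y \<and> (\<forall>x\<in>BP. real y * x \<in> \<int>)"
    then show "?L \<le> y" using l by (simp add: dvd_imp_le)
  qed
  then show ?thesis using l by simp
qed


lemma Mn_scale: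
  assumes fin: "finite I" and ne: "I \<noteq> {}" and K: "(K::real) \<ge> 0"
  shows "Mn c (\<lambda>\<alpha>. K * d \<alpha>) I (K * x) = K * Mn c d I x"
proof -
  have "Mn c (\<lambda>\<alpha>. K * d \<alpha>) I (K * x) = Min ((\<lambda>y. K * y) ` (\<lambda>\<alpha>. c \<alpha> * x + d \<alpha>) ` I)"
    unfolding Mn_def image_comp by (rule arg_cong[where f=Min]) (auto simp: algebra_simps)
  also have "\<dots> = K * Min ((\<lambda>\<alpha>. c \<alpha> * x + d \<alpha>) ` I)"
    using fin ne K by (intro mono_Min_commute[symmetric]) (auto intro: monoI mult_left_mono)
  finally show ?thesis unfolding Mn_def .
qed

lemma int_crit:
  fixes F :: "real \<Rightarrow> real" and k :: nat
  assumes k: "0 < k"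
  shows "(\<forall>r<k. \<forall>z\<in>{real r / real k<..<(real r + 1) / real k}. locally_linear_at F z)
     \<longleftrightarrow> (\<forall>x\<in>{x \<in> {0<..<1}. \<not> locally_linear_at F x}. real k * x \<in> \<int>)"
proof
  assume h: "\<forall>r<k. \<forall>z\<in>{real r / real k<..<(real r + 1) / real k}. locally_linear_at F z"
  show "\<forall>x\<in>{x \<in> {0<..<1}. \<not> locally_linear_at F x}. real k * x \<in> \<int>"
  proof (intro ballI, rule ccontr)
    fix x assume x: "x \<in> {x \<in> {0<..<1}. \<not> locally_linear_at F x}" and ni: "real k * x \<notin> \<int>"
    have kp: "real k > 0" using k by simp
    have x0: "0 < real k * x" "real k * x < real k" using x kp by auto
    define m where "m = \<lfloor>real k * x\<rfloor>"
    have m0: "0 \<le> m" unfolding m_def using x0 by simp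
    have m1: "of_int m < real k * x"
    proof -
      have "of_int m \<le> real k * x" unfolding m_def by simp
      moreover have "of_int m \<noteq> real k * x" using ni by (metis Ints_of_int)
      ultimately show ?thesis by simp
    qed
    have m2: "real k * x < of_int m + 1" unfolding m_def by linarith
    have mk: "m < int k" using m1 x0 by linarith
    define r where "r = nat m"
    have rr: "real r = of_int m" unfolding r_def using m0 by simp
    have rk: "r < k" unfolding r_def using mk m0 by linarith
    have "x \<in> {real r / real k<..<(real r + 1) / real k}"
      using m1 m2 kp rr by (auto simp: field_simps)
    then have "locally_linear_at F x" using h rk by blast
    then show False using x by simp
  qed
next
  assume h: "\<forall>x\<in>{x \<in> {0<..<1}. \<not> locally_linear_at F x}. real k * x \<in> \<int>"
  show "\<forall>r<k. \<forall>z\<in>{real r / real k<..<(real r + 1) / real k}. locally_linear_at F z"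
  proof (intro allI impI ballI, rule ccontr)
    fix r z assume r: "r < k" and z: "z \<in> {real r / real k<..<(real r + 1) / real k}"
      and nl: "\<not> locally_linear_at F z"
    have kp: "real k > 0" using k by simp
    have z1: "real r < real k * z" "real k * z < real r + 1" using z kp by (auto simp: field_simps)
    have "real r + 1 \<le> real k" using r by simp
    hence "real k * z < real k * 1" using z1 by linarith
    hence zl: "z < 1" using kp mult_less_cancel_left_pos by blast
    have "0 < real k * z" using z1 by (smt (verit) of_nat_0_le_iff)
    hence "0 < z" using kp by (simp add: zero_less_mult_iff)
    hence "0 < z \<and> z < 1" using zl by simp
    hence "real k * z \<in> \<int>" using h nl by auto
    then obtain m where m: "real k * z = of_int m" by (auto elim: Ints_cases)
    have "int r < m" "m < int r + 1" using z1 m by linarith+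
    then show False by linarith
  qed
qed

theorem lemma2:
  fixes f g Dl D' Dbl Db' :: mpoly and P p k eps0 eps1 k0 :: nat
    and Mb :: "nat \<Rightarrow> real \<Rightarrow> real" and BP :: "real set"
  assumes hf: "Poly_Mapping.keys f \<subseteq> {\<alpha>. Poly_Mapping.keys \<alpha> \<subseteq> {0,1,2} \<and> Poly_Mapping.lookup \<alpha> 0 + Poly_Mapping.lookup \<alpha> 1 = 8}"
    and hg: "Poly_Mapping.keys g \<subseteq> {\<alpha>. Poly_Mapping.keys \<alpha> \<subseteq> {0,1,2} \<and> Poly_Mapping.lookup \<alpha> 0 + Poly_Mapping.lookup \<alpha> 1 = 12}"
    and hab: "\<not> (s_order f \<ge> 4 \<and> s_order g \<ge> 6)"
    and hcls: "\<forall>l\<ge>1. ord3 l f \<ge> 4 \<and> ord3 l g \<ge> 6 \<and> ord3 l (Disc f g) \<ge> 12 \<and> (ord3 l f = 4 \<or> ord3 l g = 6)"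
    and hDelta: "Disc f g \<noteq> 0"
    and hP: "stop_cond f g P" "\<forall>q<P. \<not> stop_cond f g q"
    and hstand: "(\<exists>\<sigma><4. Fnz f \<sigma> \<and> mu 4 f P \<sigma> = 0) \<or> (\<exists>\<sigma><6. Fnz g \<sigma> \<and> mu 6 g P \<sigma> = 0)"
    and hp: "p < P"
    and hk: "0 < k"
    and Dl_def: "Dl = chain 12 (Disc f g) P"
    and D'_def: "D' = Dprime P Dl"
    and Dbl_def: "Dbl = chain 12 (Disc (base_change k f) (base_change k g)) (k * P)"
    and Db'_def: "Db' = Dprime (k * P) Dbl"
    and eps0_def: "eps0 = Min {Poly_Mapping.lookup \<alpha> (evar p) | \<alpha>. \<alpha> \<in> Poly_Mapping.keys D' \<and> Poly_Mapping.lookup \<alpha> (evar (p + 1)) = 0}"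
    and eps1_def: "eps1 = Min {Poly_Mapping.lookup \<alpha> (evar (p + 1)) | \<alpha>. \<alpha> \<in> Poly_Mapping.keys D' \<and> Poly_Mapping.lookup \<alpha> (evar p) = 0}"
    and Mb_def: "Mb = (\<lambda>(K::nat) (r::real). Min ((\<lambda>\<alpha>. (real K - r) * real (Poly_Mapping.lookup \<alpha> (evar p))
                 + r * real (Poly_Mapping.lookup \<alpha> (evar (p + 1)))) ` Poly_Mapping.keys D'))"
    and BP_def: "BP = {x \<in> {0<..<1}. \<not> locally_linear_at (Mb 1) x}"
    and k0_def: "k0 = (LEAST j::nat. 0 < j \<and> (\<forall>x\<in>BP. real j * x \<in> \<int>))"
  shows "(special_fiber D' p \<longrightarrow> eps0 > 0 \<and> eps1 > 0)
    \<and> (\<forall>r\<le>k. real (nvec Dbl (k * p + r))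
          = real (k - r) * real (nvec Dl p) + real r * real (nvec Dl (p + 1)) + Mb k (real r))
    \<and> piecewise_linear_on 0 (real k) (Mb k) \<and> concave_on {0..real k} (Mb k)
    \<and> (\<forall>r\<in>{0..1}. Mb k (real k * r) = real k * Mb 1 r)
    \<and> Mb 1 0 = 0 \<and> Mb 1 1 = 0
    \<and> finite BP \<and> BP \<subseteq> \<rat>
    \<and> ((\<forall>pb\<in>{k * p..<k * (p + 1)}. \<not> special_fiber Db' pb) \<longleftrightarrow> (\<forall>x\<in>BP. real k * x \<in> \<int>))
    \<and> ((\<forall>x\<in>BP. real k * x \<in> \<int>) \<longleftrightarrow> k0 dvd k)
    \<and> k0 = Lcm (rat_denom ` BP)"

proof -
  have suppf: "\<forall>\<alpha>\<in>Poly_Mapping.keys f. \<forall>v\<ge>3. Poly_Mapping.lookup \<alpha> v = 0"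
  proof (intro ballI allI impI)
    fix \<alpha> v assume "\<alpha> \<in> Poly_Mapping.keys f" "(3::nat) \<le> v"
    then have "Poly_Mapping.keys \<alpha> \<subseteq> {0,1,2}" "(3::nat) \<le> v" using hf by blast+
    then have "v \<notin> Poly_Mapping.keys \<alpha>" by auto
    then show "Poly_Mapping.lookup \<alpha> v = 0" by (simp add: in_keys_iff)
  qed
  have suppg: "\<forall>\<alpha>\<in>Poly_Mapping.keys g. \<forall>v\<ge>3. Poly_Mapping.lookup \<alpha> v = 0"
  proof (intro ballI allI impI)
    fix \<alpha> v assume "\<alpha> \<in> Poly_Mapping.keys g" "(3::nat) \<le> v"
    then have "Poly_Mapping.keys \<alpha> \<subseteq> {0,1,2}" "(3::nat) \<le> v" using hg by blast+
    then have "v \<notin> Poly_Mapping.keys \<alpha>" by auto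
    then show "Poly_Mapping.lookup \<alpha> v = 0" by (simp add: in_keys_iff)
  qed
  have nsf: "\<forall>q<P. \<forall>\<sigma><4. Fnz f \<sigma> \<longrightarrow> \<not> mu 4 f q \<sigma> < 4 - \<sigma>"
    using hP(2) unfolding stop_cond_def by blast
  have nsg: "\<forall>q<P. \<forall>\<sigma><6. Fnz g \<sigma> \<longrightarrow> \<not> mu 6 g q \<sigma> < 6 - \<sigma>"
    using hP(2) unfolding stop_cond_def by blast
  have vD: "valid 12 P (Disc f g)"
    by (rule valid_Disc[OF valid_from_stop[OF suppf nsf] valid_from_stop[OF suppg nsg]])
  define KD where "KD = Poly_Mapping.keys (Disc f g)"
  have finKD: "finite KD" unfolding KD_def by simp
  have neKD: "KD \<noteq> {}" unfolding KD_def using hDelta by simp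
  have suppD: "\<forall>v\<ge>3. Poly_Mapping.lookup \<alpha> v = 0" if "\<alpha> \<in> KD" for \<alpha>
    using vD that unfolding valid_def KD_def by blast
  have vDq: "12 * q \<le> Poly_Mapping.lookup \<alpha> 2 + q * Poly_Mapping.lookup \<alpha> 0" if "\<alpha> \<in> KD" "q \<le> P" for \<alpha> q
    using valid_le[OF vD that(2)] that(1) unfolding KD_def by blast
  have vbD: "valid 12 (k*P) (base_change k (Disc f g))" by (rule valid_bc[OF vD hk])
  have kbD: "Poly_Mapping.keys (base_change k (Disc f g)) = BB k ` KD"
    unfolding KD_def by (rule keys_bc[OF hk])
  have Dbl2: "Dbl = chain 12 (base_change k (Disc f g)) (k*P)" using Dbl_def by (simp add: bc_Disc)
  define n where "n q = nvec Dl q" for q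
  define nb where "nb q = nvec Dbl q" for q
  have n_eq: "n q = Min ((\<lambda>\<alpha>. EE 12 \<alpha> q) ` KD)" if "q \<le> P" for q
    unfolding n_def Dl_def KD_def using nvec_chain[OF vD that] .
  have nb_eq: "nb q = Min ((\<lambda>\<alpha>. EE 12 (BB k \<alpha>) q) ` KD)" if "q \<le> k*P" for q
    unfolding nb_def Dbl2 nvec_chain[OF vbD that] kbD image_comp by (simp add: comp_def)
  have n_le: "n q \<le> EE 12 \<alpha> q" if "\<alpha> \<in> KD" "q \<le> P" for \<alpha> q
    using that finKD by (simp add: n_eq)
  have n_ex: "\<exists>\<alpha>\<in>KD. EE 12 \<alpha> q = n q" if "q \<le> P" for q
  proof -
    have "n q \<in> (\<lambda>\<alpha>. EE 12 \<alpha> q) ` KD" unfolding n_eq[OF that] using finKD neKD by (intro Min_in) auto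
    then show ?thesis by force
  qed
  have nb_le: "nb q \<le> EE 12 (BB k \<alpha>) q" if "\<alpha> \<in> KD" "q \<le> k*P" for \<alpha> q
    using that finKD by (simp add: nb_eq)
  define G where "G \<alpha> = CC 12 P \<alpha> - NN P Dl" for \<alpha>
  define Gb where "Gb \<alpha> = CC 12 (k*P) (BB k \<alpha>) - NN (k*P) Dbl" for \<alpha>
  have kD': "Poly_Mapping.keys D' = G ` KD"
    unfolding D'_def keys_Dprime Dl_def chain_keys[OF vD] image_comp G_def KD_def by (simp add: comp_def)
  have kDb': "Poly_Mapping.keys Db' = Gb ` KD"
    unfolding Db'_def keys_Dprime Dbl2 chain_keys[OF vbD] kbD image_comp Gb_def by (simp add: comp_def Dbl2)
  have lG: "Poly_Mapping.lookup (G \<alpha>) (evar q) = EE 12 \<alpha> q - n q" if "\<alpha> \<in> KD" "q \<le> P" for \<alpha> q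
    unfolding G_def lookup_Dp[OF that(2)] n_def using lookup_CC_evar[OF suppD[OF that(1)] that(2)] by simp
  have suppB: "\<forall>v\<ge>3. Poly_Mapping.lookup (BB k \<alpha>) v = 0" if "\<alpha> \<in> KD" for \<alpha>
    using suppD[OF that] by (simp add: lookup_BB)
  have lGb: "Poly_Mapping.lookup (Gb \<alpha>) (evar j) = EE 12 (BB k \<alpha>) j - nb j" if "\<alpha> \<in> KD" "j \<le> k*P" for \<alpha> j
    unfolding Gb_def lookup_Dp[OF that(2)] nb_def using lookup_CC_evar[OF suppB[OF that(1)] that(2)] by simp
  have EEbc: "EE 12 (BB k \<alpha>) (k*p + r) = (k-r) * EE 12 \<alpha> p + r * EE 12 \<alpha> (p+1)"
    if a: "\<alpha> \<in> KD" and r: "r \<le> k" for \<alpha> r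
  proof -
    let ?a = "Poly_Mapping.lookup \<alpha> 2" and ?b = "Poly_Mapping.lookup \<alpha> 0"
    have v1: "12 * p \<le> ?a + p * ?b" using vDq[OF a] hp by simp
    have v2: "12 * (p+1) \<le> ?a + (p+1) * ?b" using vDq[OF a, of "p+1"] hp by simp
    obtain X where X: "?a + p * ?b = X + 12 * p" using v1 le_Suc_ex by (metis add.commute)
    obtain Y where Y: "?a + (p+1) * ?b = Y + 12 * (p+1)" using v2 le_Suc_ex by (metis add.commute)
    obtain s where s: "k = s + r" using r le_Suc_ex by (metis add.commute)
    have e1: "s * ?a + s * p * ?b = s * X + 12 * s * p"
    proof -
      have "s * (?a + p * ?b) = s * (X + 12 * p)" using X by simp
      then show ?thesis by (simp add: algebra_simps)
    qed
    have e2: "r * ?a + r * p * ?b + r * ?b = r * Y + 12 * r * p + 12 * r"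
    proof -
      have "r * (?a + (p+1) * ?b) = r * (Y + 12 * (p+1))" using Y by simp
      then show ?thesis by (simp add: algebra_simps)
    qed
    have lhs: "EE 12 (BB k \<alpha>) (k*p + r) = k * ?a + (k*p + r) * ?b - 12 * (k*p + r)"
    proof -
      have b0: "Poly_Mapping.lookup (BB k \<alpha>) 0 = ?b" by (simp add: lookup_BB)
      show ?thesis unfolding EE_def lookup_BB2[OF hk] b0 ..
    qed
    have "k * ?a + (k*p + r) * ?b = (s * X + r * Y) + 12 * (k*p + r)"
      using e1 e2 s by (simp add: algebra_simps)
    moreover have "EE 12 \<alpha> p = X" "EE 12 \<alpha> (p+1) = Y" unfolding EE_def using X Y by (simp_all add: algebra_simps)
    ultimately show ?thesis using lhs s by simp
  qed
  define A where "A \<alpha> = EE 12 \<alpha> p - n p" for \<alpha>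
  define Bv where "Bv \<alpha> = EE 12 \<alpha> (p+1) - n (p+1)" for \<alpha>
  define cc where "cc \<alpha> = real (Bv \<alpha>) - real (A \<alpha>)" for \<alpha>
  define d1 where "d1 \<alpha> = real (A \<alpha>)" for \<alpha>
  have hp1: "p + 1 \<le> P" using hp by simp
  have Mb_eq: "Mb K = Mn cc (\<lambda>\<alpha>. real K * d1 \<alpha>) KD" for K
  proof
    fix x
    show "Mb K x = Mn cc (\<lambda>\<alpha>. real K * d1 \<alpha>) KD x"
      unfolding Mb_def Mn_def kD' image_comp
    proof (rule arg_cong[where f=Min], rule image_cong, simp)
      fix \<alpha> assume a: "\<alpha> \<in> KD"
      have l1: "Poly_Mapping.lookup (G \<alpha>) (evar p) = A \<alpha>" using lG[OF a, of p] hp by (simp add: A_def)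
      have l2: "Poly_Mapping.lookup (G \<alpha>) (evar (p+1)) = Bv \<alpha>" using lG[OF a hp1] by (simp add: Bv_def)
      show "((\<lambda>\<alpha>. (real K - x) * real (Poly_Mapping.lookup \<alpha> (evar p)) +
               x * real (Poly_Mapping.lookup \<alpha> (evar (p + 1)))) \<circ> G) \<alpha> =
            cc \<alpha> * x + real K * d1 \<alpha>"
        unfolding comp_def l1 l2 cc_def d1_def by (simp add: algebra_simps)
    qed
  qed
  have Mb1: "Mb 1 = Mn cc d1 KD" using Mb_eq[of 1] by simp
  have hp1': "\<And>j. j \<le> k \<Longrightarrow> k*p + j \<le> k*P"
  proof -
    fix j assume "j \<le> k"
    then have "k*p + j \<le> k*(p+1)" by simp
    also have "\<dots> \<le> k*P" by (rule mult_le_mono2) (use hp in simp)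
    finally show "k*p + j \<le> k*P" .
  qed
  define C where "C j = real (k - j) * real (n p) + real j * real (n (p+1))" for j
  have Ehelp: "real (EE 12 (BB k \<alpha>) (k*p + j)) = cc \<alpha> * real j + real k * d1 \<alpha> + C j"
    if a: "\<alpha> \<in> KD" and j: "j \<le> k" for \<alpha> j
  proof -
    have e1: "EE 12 \<alpha> p = A \<alpha> + n p" using n_le[OF a, of p] hp by (simp add: A_def)
    have e2: "EE 12 \<alpha> (p+1) = Bv \<alpha> + n (p+1)" using n_le[OF a hp1] by (simp add: Bv_def)
    have kj: "real (k-j) = real k - real j" using j by (simp add: of_nat_diff)
    show ?thesis unfolding EEbc[OF a j] e1 e2 C_def cc_def d1_def of_nat_add of_nat_mult kj
      by (simp add: algebra_simps)
  qed
  have P2: "real (nb (k*p + j)) = Mb k (real j) + C j" if j: "j \<le> k" for j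
  proof -
    have "real (nb (k*p + j)) = real (Min ((\<lambda>\<alpha>. EE 12 (BB k \<alpha>) (k*p + j)) ` KD))"
      using nb_eq[OF hp1'[OF j]] by simp
    also have "\<dots> = Min (real ` (\<lambda>\<alpha>. EE 12 (BB k \<alpha>) (k*p + j)) ` KD)"
      using finKD neKD by (intro mono_Min_commute) (auto intro: monoI)
    also have "\<dots> = Min ((\<lambda>\<alpha>. (cc \<alpha> * real j + real k * d1 \<alpha>) + C j) ` KD)"
      unfolding image_comp by (rule arg_cong[where f=Min], rule image_cong) (simp_all add: Ehelp j)
    also have "\<dots> = Min ((\<lambda>\<alpha>. cc \<alpha> * real j + real k * d1 \<alpha>) ` KD) + C j"
      using finKD neKD by (rule Min_add_commute)
    also have "\<dots> = Mb k (real j) + C j" unfolding Mb_eq Mn_def ..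
    finally show ?thesis .
  qed
  have part2: "\<forall>r\<le>k. real (nvec Dbl (k * p + r))
          = real (k - r) * real (nvec Dl p) + real r * real (nvec Dl (p + 1)) + Mb k (real r)"
    using P2 unfolding nb_def C_def n_def by (simp add: algebra_simps)
  obtain \<alpha>0 where a0: "\<alpha>0 \<in> KD" "EE 12 \<alpha>0 p = n p" using n_ex[of p] hp by auto
  obtain \<alpha>1 where a1: "\<alpha>1 \<in> KD" "EE 12 \<alpha>1 (p+1) = n (p+1)" using n_ex[OF hp1] by auto
  have A0: "A \<alpha>0 = 0" using a0 by (simp add: A_def)
  have B1: "Bv \<alpha>1 = 0" using a1 by (simp add: Bv_def)
  have part1: "special_fiber D' p \<longrightarrow> eps0 > 0 \<and> eps1 > 0"
  proof
    assume sf: "special_fiber D' p"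
    define S0 where "S0 = {Poly_Mapping.lookup \<alpha> (evar p) | \<alpha>. \<alpha> \<in> Poly_Mapping.keys D' \<and> Poly_Mapping.lookup \<alpha> (evar (p + 1)) = 0}"
    define S1 where "S1 = {Poly_Mapping.lookup \<alpha> (evar (p + 1)) | \<alpha>. \<alpha> \<in> Poly_Mapping.keys D' \<and> Poly_Mapping.lookup \<alpha> (evar p) = 0}"
    have fS0: "finite S0"
      by (rule finite_subset[of _ "(\<lambda>\<alpha>. Poly_Mapping.lookup \<alpha> (evar p)) ` Poly_Mapping.keys D'"]) (auto simp: S0_def)
    have fS1: "finite S1"
      by (rule finite_subset[of _ "(\<lambda>\<alpha>. Poly_Mapping.lookup \<alpha> (evar (p+1))) ` Poly_Mapping.keys D'"]) (auto simp: S1_def)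
    have G1: "G \<alpha>1 \<in> Poly_Mapping.keys D'" "Poly_Mapping.lookup (G \<alpha>1) (evar (p+1)) = 0"
      using a1 lG[OF a1(1) hp1] kD' by auto
    have G0: "G \<alpha>0 \<in> Poly_Mapping.keys D'" "Poly_Mapping.lookup (G \<alpha>0) (evar p) = 0"
      using a0 lG[OF a0(1), of p] hp kD' by auto
    have neS0: "S0 \<noteq> {}" unfolding S0_def using G1 by blast
    have neS1: "S1 \<noteq> {}" unfolding S1_def using G0 by blast
    have pS0: "\<forall>x\<in>S0. 0 < x" unfolding S0_def using sf unfolding special_fiber_def by fastforce
    have pS1: "\<forall>x\<in>S1. 0 < x" unfolding S1_def using sf unfolding special_fiber_def by fastforce
    have "eps0 \<in> S0" unfolding eps0_def S0_def[symmetric] using fS0 neS0 by (rule Min_in)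
    moreover have "eps1 \<in> S1" unfolding eps1_def S1_def[symmetric] using fS1 neS1 by (rule Min_in)
    ultimately show "eps0 > 0 \<and> eps1 > 0" using pS0 pS1 by blast
  qed
  have pwl: "piecewise_linear_on 0 (real k) (Mb k)"
    unfolding Mb_eq by (rule Mn_pwl[OF finKD neKD]) (simp add: hk)
  have conc: "concave_on {0..real k} (Mb k)"
    unfolding Mb_eq by (rule Mn_concave[OF finKD neKD]) simp
  have scale: "Mb k (real k * x) = real k * Mb 1 x" for x
    unfolding Mb_eq[of k] Mb1 by (rule Mn_scale[OF finKD neKD]) simp
  have Mb10: "Mb 1 0 = 0"
  proof -
    have "Mn cc d1 KD 0 = cc \<alpha>0 * 0 + d1 \<alpha>0"
      by (rule Mn_eqI[OF finKD neKD a0(1)]) (simp add: d1_def A0)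
    then show ?thesis unfolding Mb1 by (simp add: d1_def A0)
  qed
  have Mb11: "Mb 1 1 = 0"
  proof -
    have "Mn cc d1 KD 1 = cc \<alpha>1 * 1 + d1 \<alpha>1"
      by (rule Mn_eqI[OF finKD neKD a1(1)]) (simp add: d1_def cc_def B1)
    then show ?thesis unfolding Mb1 by (simp add: d1_def cc_def B1)
  qed
  have BPX: "BP \<subseteq> Xc cc d1 KD"
    unfolding BP_def Mb1 using Mn_ll_notX[OF finKD neKD] by blast
  have finBP: "finite BP" using BPX Xc_finite[OF finKD neKD] by (rule finite_subset)
  have ratBP: "BP \<subseteq> \<rat>" using BPX Xc_rat[OF finKD neKD, of cc d1] by (auto simp: cc_def d1_def)
  have lGb0: "Poly_Mapping.lookup (Gb \<alpha>) (evar (k*p + j)) = 0 \<longleftrightarrow> Mb k (real j) = cc \<alpha> * real j + real k * d1 \<alpha>"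
    if a: "\<alpha> \<in> KD" and j: "j \<le> k" for \<alpha> j
  proof -
    have "Poly_Mapping.lookup (Gb \<alpha>) (evar (k*p + j)) = 0 \<longleftrightarrow> EE 12 (BB k \<alpha>) (k*p+j) = nb (k*p+j)"
      using lGb[OF a hp1'[OF j]] nb_le[OF a hp1'[OF j]] by auto
    also have "\<dots> \<longleftrightarrow> real (EE 12 (BB k \<alpha>) (k*p+j)) = real (nb (k*p+j))" by simp
    also have "\<dots> \<longleftrightarrow> Mb k (real j) = cc \<alpha> * real j + real k * d1 \<alpha>"
      unfolding Ehelp[OF a j] P2[OF j] by auto
    finally show ?thesis .
  qed
  have scale2: "Mb k x = real k * Mb 1 (x / real k)" for x
    using scale[of "x / real k"] hk by simp
  have crit: "\<not> special_fiber Db' (k*p + r) \<longleftrightarrow> (\<forall>z\<in>{real r / real k<..<(real r + 1) / real k}. locally_linear_at (Mb 1) z)"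
    if r: "r < k" for r
  proof -
    have "\<not> special_fiber Db' (k*p + r) \<longleftrightarrow> (\<exists>\<alpha>\<in>KD. Poly_Mapping.lookup (Gb \<alpha>) (evar (k*p+r)) = 0
          \<and> Poly_Mapping.lookup (Gb \<alpha>) (evar (k*p+(r+1))) = 0)"
      unfolding special_fiber_def kDb' by auto
    also have "\<dots> \<longleftrightarrow> (\<exists>\<alpha>\<in>KD. Mb k (real r) = cc \<alpha> * real r + real k * d1 \<alpha>
          \<and> Mb k (real (r+1)) = cc \<alpha> * real (r+1) + real k * d1 \<alpha>)"
    proof (rule bex_cong[OF refl])
      fix \<alpha> assume a: "\<alpha> \<in> KD"
      show "(Poly_Mapping.lookup (Gb \<alpha>) (evar (k*p+r)) = 0 \<and> Poly_Mapping.lookup (Gb \<alpha>) (evar (k*p+(r+1))) = 0)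
          \<longleftrightarrow> (Mb k (real r) = cc \<alpha> * real r + real k * d1 \<alpha> \<and> Mb k (real (r+1)) = cc \<alpha> * real (r+1) + real k * d1 \<alpha>)"
        using lGb0[OF a, of r] lGb0[OF a, of "r+1"] r by simp
    qed
    also have "\<dots> \<longleftrightarrow> (\<exists>\<alpha>\<in>KD. Mn cc d1 KD (real r / real k) = cc \<alpha> * (real r / real k) + d1 \<alpha>
          \<and> Mn cc d1 KD ((real r + 1) / real k) = cc \<alpha> * ((real r + 1) / real k) + d1 \<alpha>)"
    proof (rule bex_cong[OF refl])
      fix \<alpha> assume a: "\<alpha> \<in> KD"
      have eq: "Mb k x = cc \<alpha> * x + real k * d1 \<alpha> \<longleftrightarrow> Mn cc d1 KD (x / real k) = cc \<alpha> * (x / real k) + d1 \<alpha>" for x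
      proof -
        have "cc \<alpha> * x + real k * d1 \<alpha> = real k * (cc \<alpha> * (x / real k) + d1 \<alpha>)" using hk by (simp add: field_simps)
        then show ?thesis unfolding scale2 Mb1 using hk by simp
      qed
      show "(Mb k (real r) = cc \<alpha> * real r + real k * d1 \<alpha> \<and> Mb k (real (r+1)) = cc \<alpha> * real (r+1) + real k * d1 \<alpha>)
        \<longleftrightarrow> (Mn cc d1 KD (real r / real k) = cc \<alpha> * (real r / real k) + d1 \<alpha>
          \<and> Mn cc d1 KD ((real r + 1) / real k) = cc \<alpha> * ((real r + 1) / real k) + d1 \<alpha>)"
        by (simp only: eq of_nat_add of_nat_1)
    qed
    also have "\<dots> \<longleftrightarrow> (\<forall>z\<in>{real r / real k<..<(real r + 1) / real k}. locally_linear_at (Mb 1) z)"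
      unfolding Mb1 by (rule Mn_crit[OF finKD neKD]) (simp add: divide_strict_right_mono hk)
    finally show ?thesis .
  qed
  have part4: "(\<forall>pb\<in>{k * p..<k * (p + 1)}. \<not> special_fiber Db' pb) \<longleftrightarrow> (\<forall>x\<in>BP. real k * x \<in> \<int>)"
  proof -
    have "(\<forall>pb\<in>{k * p..<k * (p + 1)}. \<not> special_fiber Db' pb) \<longleftrightarrow> (\<forall>r<k. \<not> special_fiber Db' (k*p + r))"
    proof
      assume h: "\<forall>pb\<in>{k * p..<k * (p + 1)}. \<not> special_fiber Db' pb"
      show "\<forall>r<k. \<not> special_fiber Db' (k*p + r)"
      proof (intro allI impI)
        fix r assume "r < k"
        then have "k*p + r \<in> {k * p..<k * (p + 1)}" by simp
        then show "\<not> special_fiber Db' (k*p + r)" using h by blast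
      qed
    next
      assume h: "\<forall>r<k. \<not> special_fiber Db' (k*p + r)"
      show "\<forall>pb\<in>{k * p..<k * (p + 1)}. \<not> special_fiber Db' pb"
      proof
        fix pb assume pb: "pb \<in> {k * p..<k * (p + 1)}"
        then have "pb - k*p < k" "pb = k*p + (pb - k*p)" by auto
        then show "\<not> special_fiber Db' pb" using h by metis
      qed
    qed
    also have "\<dots> \<longleftrightarrow> (\<forall>r<k. \<forall>z\<in>{real r / real k<..<(real r + 1) / real k}. locally_linear_at (Mb 1) z)"
      using crit by simp
    also have "\<dots> \<longleftrightarrow> (\<forall>x\<in>BP. real k * x \<in> \<int>)"
      unfolding BP_def by (rule int_crit[OF hk])
    finally show ?thesis .
  qed
  have part5: "((\<forall>x\<in>BP. real k * x \<in> \<int>) \<longleftrightarrow> k0 dvd k) \<and> k0 = Lcm (rat_denom ` BP)"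
    by (rule k0_part[OF finBP ratBP k0_def])
  show ?thesis using part1 part2 pwl conc scale Mb10 Mb11 finBP ratBP part4 part5 by blast
qed


end
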